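(* Let $k\ge 2$ and $n\ge 2$ be integers. Then the center of the $k$-Pell graph $\Pi_{n,k}$ is $$C(\Pi_{n,k})=\begin{cases}\Theta_n(k), & k\text{ even},\\ \Phi_n\!\left(\tfrac{k-1}{2},\tfrac{k+1}{2}\right), & k\text{ odd and } n\text{ even},\\ \Psi_n\!\left(\tfrac{k-1}{2},\tfrac{k+1}{2}\right), & k\text{ odd and } n\text{ odd}.\end{cases}$$ Further, $$|C(\Pi_{n,k})|=\begin{cases}F_{n+2}, & k\text{ even},\\ (n+4)\,2^{\frac{n}{2}-2}, & k\text{ odd and } n\text{ even},\\ 2^{\frac{n-1}{2}}, & k\text{ odd and } n\text{ odd}.\end{cases}$$ In addition, if $k$ is even, then the subgraph of $\Pi_{n,k}$ induced by $C(\Pi_{n,k})$ is isomorphic to the Fibonacci cube $\Gamma_n$.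
   Context: For an integer $k\ge 2$, a $k$-Pell string is a finite word over the alphabet $\{0,1,\ldots,k-1,kk\}$, i.e. a word over $\{0,1,\ldots,k\}$ in which every maximal run of the letter $k$ has even length. For $n\ge 0$, the $k$-Pell graph $\Pi_{n,k}$ has as vertices all $k$-Pell strings of length $n$, and two vertices are adjacent if one is obtained from the other either by replacing a single letter $i$ by $i+1$ (or vice versa) for some $i\in\{0,1,\ldots,k-2\}$, or by replacing one factor $(k-1)(k-1)$ by $kk$ (or vice versa), in such a way that the resulting string is again a $k$-Pell string. The center $C(G)$ of a graph is the set of vertices of minimum eccentricity. $F_m$ denotes the Fibonacci numbers ($F_0=0$, $F_1=1$, $F_m=F_{m-1}+F_{m-2}$). The Fibonacci cube $\Gamma_n$ is the graph whose vertices are binary strings of length $n$ with no two consecutive 1s, two being adjacent iff they differ in exactly one coordinate. For $k$ even, $\Theta_n(k)$ is the set of words $t_1\ldots t_n$ with every $t_i\in\{\frac k2-1,\frac k2\}$ and containing no two consecutive letters equal to $\frac k2-1$. For $n$ even and letters $a,b$, $\Phi_n(a,b)$ is the set of words of length $n$ that are concatenations of $n/2$ blocks from $\{aa,ab,ba\}$ (each block of length 2) such that no block $ba$ occurs before (to the left of) a block $ab$. For $n$ odd and letters $a,b$, $\Psi_n(a,b)$ is the set of words of length $n$ over $\{a,b\}$ that start and end with $a$, contain no factor $bb$, and in which every maximal run of $a$'s has odd length. Here $a=\frac{k-1}{2}$ and $b=\frac{k+1}{2}$ are regarded as letters (digits) of the alphabet $\{0,\ldots,k\}$. *)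

theory Defs
  imports Main "HOL-Number_Theory.Fib"
begin

text \<open>k-Pell strings: words over {0,...,k-1, kk}, i.e. words over {0..k}
  in which every maximal run of the letter k has even length.\<close>
fun pell_word :: "nat \<Rightarrow> nat list \<Rightarrow> bool" where
  "pell_word k [] = True"
| "pell_word k (x # xs) =
     (if x = k then (case xs of [] \<Rightarrow> False | y # ys \<Rightarrow> y = k \<and> pell_word k ys)
      else x < k \<and> pell_word k xs)"

definition pell_vertices :: "nat \<Rightarrow> nat \<Rightarrow> nat list set" where
  "pell_vertices n k = {w. length w = n \<and> pell_word k w}"

definition pell_step1 :: "nat \<Rightarrow> nat list \<Rightarrow> nat list \<Rightarrow> bool" where
  "pell_step1 k u v \<longleftrightarrow> length u = length v \<and>
     (\<exists>i < length u. (\<forall>j < length u. j \<noteq> i \<longrightarrow> u ! j = v ! j) \<and>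
        u ! i \<le> k - 2 \<and> v ! i = u ! i + 1)"

definition pell_step2 :: "nat \<Rightarrow> nat list \<Rightarrow> nat list \<Rightarrow> bool" where
  "pell_step2 k u v \<longleftrightarrow> (\<exists>p s. u = p @ [k - 1, k - 1] @ s \<and> v = p @ [k, k] @ s)"

definition pell_adj :: "nat \<Rightarrow> nat list \<Rightarrow> nat list \<Rightarrow> bool" where
  "pell_adj k u v \<longleftrightarrow> pell_word k u \<and> pell_word k v \<and>
     (pell_step1 k u v \<or> pell_step1 k v u \<or> pell_step2 k u v \<or> pell_step2 k v u)"

definition gdist :: "('a \<Rightarrow> 'a \<Rightarrow> bool) \<Rightarrow> 'a \<Rightarrow> 'a \<Rightarrow> nat" where
  "gdist E u v = (LEAST m. (E ^^ m) u v)"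

definition ecc :: "'a set \<Rightarrow> ('a \<Rightarrow> 'a \<Rightarrow> bool) \<Rightarrow> 'a \<Rightarrow> nat" where
  "ecc V E v = Max ((\<lambda>u. gdist E v u) ` V)"

definition center :: "'a set \<Rightarrow> ('a \<Rightarrow> 'a \<Rightarrow> bool) \<Rightarrow> 'a set" where
  "center V E = {v \<in> V. \<forall>u \<in> V. ecc V E v \<le> ecc V E u}"

definition pell_center :: "nat \<Rightarrow> nat \<Rightarrow> nat list set" where
  "pell_center n k = center (pell_vertices n k) (pell_adj k)"

definition Theta :: "nat \<Rightarrow> nat \<Rightarrow> nat list set" where
  "Theta n k = {w. length w = n \<and> set w \<subseteq> {k div 2 - 1, k div 2} \<and>
      (\<forall>i. Suc i < n \<longrightarrow> \<not> (w ! i = k div 2 - 1 \<and> w ! Suc i = k div 2 - 1))}"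

definition Phi :: "nat \<Rightarrow> nat \<Rightarrow> nat \<Rightarrow> nat list set" where
  "Phi n a b = {w. length w = n \<and> (\<exists>bs. length bs = n div 2 \<and>
      set bs \<subseteq> {[a, a], [a, b], [b, a]} \<and> w = concat bs \<and>
      (\<forall>i j. i < j \<and> j < length bs \<longrightarrow> \<not> (bs ! i = [b, a] \<and> bs ! j = [a, b])))}"

definition Psi :: "nat \<Rightarrow> nat \<Rightarrow> nat \<Rightarrow> nat list set" where
  "Psi n a b = {w. length w = n \<and> set w \<subseteq> {a, b} \<and> 0 < n \<and>
      w ! 0 = a \<and> w ! (n - 1) = a \<and>
      (\<forall>i. Suc i < n \<longrightarrow> \<not> (w ! i = b \<and> w ! Suc i = b)) \<and>
      (\<forall>i j. i \<le> j \<and> j < n \<and> (\<forall>l. i \<le> l \<and> l \<le> j \<longrightarrow> w ! l = a) \<and>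
             (i = 0 \<or> w ! (i - 1) \<noteq> a) \<and> (j = n - 1 \<or> w ! (j + 1) \<noteq> a)
             \<longrightarrow> odd (j - i + 1))}"

definition fib_cube_vertices :: "nat \<Rightarrow> nat list set" where
  "fib_cube_vertices n = {w. length w = n \<and> set w \<subseteq> {0, 1} \<and>
      (\<forall>i. Suc i < n \<longrightarrow> \<not> (w ! i = 1 \<and> w ! Suc i = 1))}"

definition fib_cube_adj :: "nat list \<Rightarrow> nat list \<Rightarrow> bool" where
  "fib_cube_adj u v \<longleftrightarrow> length u = length v \<and> card {i. i < length u \<and> u ! i \<noteq> v ! i} = 1"

definition graph_iso :: "'a set \<Rightarrow> ('a \<Rightarrow> 'a \<Rightarrow> bool) \<Rightarrow> 'b set \<Rightarrow> ('b \<Rightarrow> 'b \<Rightarrow> bool) \<Rightarrow> bool" where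
  "graph_iso V1 E1 V2 E2 \<longleftrightarrow> (\<exists>f. bij_betw f V1 V2 \<and>
      (\<forall>u \<in> V1. \<forall>v \<in> V1. E1 u v \<longleftrightarrow> E2 (f u) (f v)))"

end

theory Submission
  imports Defs
begin


lemma pell_word_append: "pell_word k p \<Longrightarrow> pell_word k q \<Longrightarrow> pell_word k (p @ q)"
  by (induction k p rule: pell_word.induct) (auto split: list.splits if_splits)

lemma pell_word_le: "pell_word k w \<Longrightarrow> set w \<subseteq> {..k}"
  by (induction k w rule: pell_word.induct) (auto split: list.splits if_splits)

lemma pell_word_lt: "set w \<subseteq> {..<k} \<Longrightarrow> pell_word k w"
  by (induction w) auto

lemma step1_iff: "pell_step1 k u v \<longleftrightarrow> (\<exists>p s x. u = p @ [x] @ s \<and> v = p @ [Suc x] @ s \<and> x \<le> k - 2)"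
proof
  assume "pell_step1 k u v"
  then obtain i where len: "length u = length v" and i: "i < length u"
    and eq: "\<forall>j < length u. j \<noteq> i \<longrightarrow> u ! j = v ! j" and x: "u ! i \<le> k - 2" and y: "v ! i = u ! i + 1"
    unfolding pell_step1_def by blast
  have tk: "take i v = take i u" using eq i len by (intro nth_equalityI) auto
  have dr: "drop (Suc i) v = drop (Suc i) u" using eq i len by (intro nth_equalityI) auto
  have "u = take i u @ [u ! i] @ drop (Suc i) u" using i by (simp add: id_take_nth_drop)
  moreover have "v = take i u @ [Suc (u ! i)] @ drop (Suc i) u"
    using i len y tk dr by (metis Cons_eq_appendI Suc_eq_plus1 append_self_conv2 id_take_nth_drop)
  ultimately show "\<exists>p s x. u = p @ [x] @ s \<and> v = p @ [Suc x] @ s \<and> x \<le> k - 2" using x by blast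
next
  assume "\<exists>p s x. u = p @ [x] @ s \<and> v = p @ [Suc x] @ s \<and> x \<le> k - 2"
  then obtain p s x where "u = p @ [x] @ s" "v = p @ [Suc x] @ s" "x \<le> k - 2" by blast
  then show "pell_step1 k u v" unfolding pell_step1_def
    by (intro conjI exI[of _ "length p"]) (auto simp: nth_append)
qed

lemma adj_sym: "pell_adj k u v \<Longrightarrow> pell_adj k v u"
  unfolding pell_adj_def by blast

lemma adj_len: "pell_adj k u v \<Longrightarrow> length u = length v"
  unfolding pell_adj_def step1_iff pell_step2_def by auto

lemma adj_ctx:
  assumes "pell_adj k u v" "pell_word k p" "pell_word k s"
  shows "pell_adj k (p @ u @ s) (p @ v @ s)"
proof -
  have w: "pell_word k (p @ u @ s)" "pell_word k (p @ v @ s)"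
    using assms pell_word_append unfolding pell_adj_def by auto
  have s1: "pell_step1 k (p @ u @ s) (p @ v @ s)" if "pell_step1 k u v" for u v
  proof -
    from that obtain p' s' x where "u = p' @ [x] @ s'" "v = p' @ [Suc x] @ s'" "x \<le> k - 2"
      unfolding step1_iff by blast
    then show ?thesis unfolding step1_iff by (intro exI[of _ "p @ p'"] exI[of _ "s' @ s"] exI[of _ x]) auto
  qed
  have s2: "pell_step2 k (p @ u @ s) (p @ v @ s)" if "pell_step2 k u v" for u v
  proof -
    from that obtain p' s' where "u = p' @ [k-1,k-1] @ s'" "v = p' @ [k,k] @ s'"
      unfolding pell_step2_def by blast
    then show ?thesis unfolding pell_step2_def by (intro exI[of _ "p @ p'"] exI[of _ "s' @ s"]) auto
  qed
  show ?thesis using assms(1) w s1 s2 unfolding pell_adj_def by blast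
qed

lemma relpowp_sym:
  assumes "\<And>x y. E x y \<Longrightarrow> E y x"
  shows "(E ^^ m) u v \<Longrightarrow> (E ^^ m) v u"
proof (induction m arbitrary: v)
  case 0 then show ?case by simp
next
  case (Suc m)
  from Suc.prems obtain w where "(E ^^ m) u w" "E w v" by (auto elim: relpowp_Suc_E)
  then show ?case using Suc.IH assms by (meson relpowp_Suc_I2)
qed

lemma relpowp_len: "((pell_adj k) ^^ m) u v \<Longrightarrow> length u = length v"
proof (induction m arbitrary: v)
  case 0 then show ?case by simp
next
  case (Suc m)
  from Suc.prems obtain w where "((pell_adj k) ^^ m) u w" "pell_adj k w v" by (auto elim: relpowp_Suc_E)
  then show ?case using Suc.IH adj_len by metis
qed

definition dle :: "nat \<Rightarrow> nat \<Rightarrow> nat list \<Rightarrow> nat list \<Rightarrow> bool" where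
  "dle k m u v \<longleftrightarrow> (\<exists>m' \<le> m. ((pell_adj k) ^^ m') u v)"

lemma dle_refl: "dle k 0 u u" unfolding dle_def by auto

lemma dle_mono: "dle k m u v \<Longrightarrow> m \<le> m' \<Longrightarrow> dle k m' u v"
  unfolding dle_def using order_trans by blast

lemma dle_trans: "dle k m1 u w \<Longrightarrow> dle k m2 w v \<Longrightarrow> dle k (m1 + m2) u v"
  unfolding dle_def
proof (elim exE conjE)
  fix a b assume "a \<le> m1" "(pell_adj k ^^ a) u w" "b \<le> m2" "(pell_adj k ^^ b) w v"
  then have "(pell_adj k ^^ (a + b)) u v" by (auto simp: relpowp_add)
  then show "\<exists>m'\<le>m1 + m2. (pell_adj k ^^ m') u v" using \<open>a \<le> m1\<close> \<open>b \<le> m2\<close> by (intro exI[of _ "a+b"]) auto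
qed

lemma dle_adj: "pell_adj k u v \<Longrightarrow> dle k 1 u v"
  unfolding dle_def by (intro exI[of _ 1]) auto

lemma dle_sym: assumes "dle k m u v" shows "dle k m v u"
proof -
  have "((pell_adj k) ^^ m') v u" if "((pell_adj k) ^^ m') u v" for m'
    using relpowp_sym[of "pell_adj k", OF adj_sym] that by blast
  then show ?thesis using assms unfolding dle_def by blast
qed

lemma dle_ctx:
  assumes "dle k m u v" "pell_word k p" "pell_word k s"
  shows "dle k m (p @ u @ s) (p @ v @ s)"
proof -
  have "((pell_adj k) ^^ m') (p @ u @ s) (p @ v @ s)" if "((pell_adj k) ^^ m') u v" for m'
    using that
  proof (induction m' arbitrary: v)
    case 0 then show ?case by simp
  next
    case (Suc m')
    from Suc.prems obtain w where "((pell_adj k) ^^ m') u w" "pell_adj k w v" by (auto elim: relpowp_Suc_E)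
    then show ?case using Suc.IH adj_ctx[OF _ assms(2,3)] by (meson relpowp_Suc_I)
  qed
  then show ?thesis using assms(1) unfolding dle_def by blast
qed

lemma dle_gdist: "dle k m u v \<Longrightarrow> gdist (pell_adj k) u v \<le> m"
  unfolding dle_def gdist_def by (meson Least_le order_trans)

lemma gdist_path: "dle k m u v \<Longrightarrow> ((pell_adj k) ^^ (gdist (pell_adj k) u v)) u v"
  unfolding dle_def gdist_def by (meson LeastI)



definition FF :: "nat \<Rightarrow> nat \<Rightarrow> int" where
  "FF k x = (if x = k then 2 * int k - 1 else 2 * int x)"

fun Dl :: "nat \<Rightarrow> nat list \<Rightarrow> nat list \<Rightarrow> int" where
  "Dl k (x # xs) (y # ys) = \<bar>FF k x - FF k y\<bar> + Dl k xs ys"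
| "Dl k _ _ = 0"

lemma Dl_nonneg: "Dl k u v \<ge> 0"
  by (induction k u v rule: Dl.induct) auto

lemma Dl_self: "Dl k u u = 0"
  by (induction u) auto

lemma Dl_append: "length p = length p' \<Longrightarrow> Dl k (p @ q) (p' @ q') = Dl k p p' + Dl k q q'"
  by (induction p p' rule: list_induct2) auto

lemma Dl_tri: "length u = length w \<Longrightarrow> length w = length v \<Longrightarrow> Dl k u v \<le> Dl k u w + Dl k w v"
proof (induction u w arbitrary: v rule: list_induct2)
  case Nil then show ?case by simp
next
  case (Cons x xs y ys)
  then obtain z zs where "v = z # zs" by (cases v) auto
  have "\<bar>FF k x - FF k z\<bar> \<le> \<bar>FF k x - FF k y\<bar> + \<bar>FF k y - FF k z\<bar>"
    using abs_triangle_ineq[of "FF k x - FF k y" "FF k y - FF k z"] by simp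
  moreover have "Dl k xs zs \<le> Dl k xs ys + Dl k ys zs" using Cons \<open>v = z # zs\<close> by auto
  ultimately show ?case using \<open>v = z # zs\<close> by simp
qed

lemma Dl_step1: "k \<ge> 2 \<Longrightarrow> x \<le> k - 2 \<Longrightarrow> length p = length p \<Longrightarrow> Dl k (p @ [x] @ s) (p @ [Suc x] @ s) \<le> 2"
proof -
  assume k: "k \<ge> 2" and x: "x \<le> k - 2"
  have e: "FF k x = 2 * int x" "FF k (Suc x) = 2 * int x + 2" using k x by (auto simp: FF_def)
  have "Dl k (p @ [x] @ s) (p @ [Suc x] @ s) = Dl k p p + Dl k ([x] @ s) ([Suc x] @ s)"
    by (rule Dl_append) simp
  also have "\<dots> = \<bar>FF k x - FF k (Suc x)\<bar>" by (simp add: Dl_self)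
  finally show ?thesis unfolding e by simp
qed

lemma Dl_step2: "k \<ge> 2 \<Longrightarrow> Dl k (p @ [k-1,k-1] @ s) (p @ [k,k] @ s) \<le> 2"
proof -
  assume k: "k \<ge> 2"
  have e: "FF k (k-1) = 2 * int k - 2" "FF k k = 2 * int k - 1" using k by (auto simp: FF_def)
  have "Dl k (p @ [k-1,k-1] @ s) (p @ [k,k] @ s) = Dl k p p + Dl k ([k-1,k-1] @ s) ([k,k] @ s)"
    by (rule Dl_append) simp
  also have "\<dots> = \<bar>FF k (k-1) - FF k k\<bar> + \<bar>FF k (k-1) - FF k k\<bar>" by (simp add: Dl_self)
  finally show ?thesis unfolding e by simp
qed

lemma Dl_sym: "Dl k u v = Dl k v u"
  by (induction k u v rule: Dl.induct) (auto simp: abs_minus_commute)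

lemma Dl_adj: "k \<ge> 2 \<Longrightarrow> pell_adj k u v \<Longrightarrow> Dl k u v \<le> 2"
proof -
  assume k: "k \<ge> 2" and a: "pell_adj k u v"
  have s1: "Dl k u v \<le> 2" if "pell_step1 k u v" for u v
    using that Dl_step1[OF k] unfolding step1_iff by blast
  have s2: "Dl k u v \<le> 2" if "pell_step2 k u v" for u v
    using that Dl_step2[OF k] unfolding pell_step2_def by blast
  show ?thesis using a s1 s2 Dl_sym unfolding pell_adj_def by metis
qed

lemma Dl_path: "k \<ge> 2 \<Longrightarrow> ((pell_adj k) ^^ m) u v \<Longrightarrow> Dl k u v \<le> 2 * int m"
proof (induction m arbitrary: v)
  case 0 then show ?case by (simp add: Dl_self)
next
  case (Suc m)
  from Suc.prems obtain w where w: "((pell_adj k) ^^ m) u w" "pell_adj k w v" by (auto elim: relpowp_Suc_E)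
  have "Dl k u v \<le> Dl k u w + Dl k w v"
    using w relpowp_len adj_len by (metis Dl_tri)
  then show ?case using Suc.IH[OF Suc.prems(1) w(1)] Dl_adj[OF Suc.prems(1) w(2)] by simp
qed

lemma adj_up: "Suc y < k \<Longrightarrow> pell_adj k [y] [Suc y]"
proof -
  assume a: "Suc y < k"
  have "pell_step1 k [y] [Suc y]" unfolding step1_iff
    using a by (intro exI[of _ "[]"]) auto
  moreover have "pell_word k [y]" "pell_word k [Suc y]" using a by auto
  ultimately show ?thesis unfolding pell_adj_def by blast
qed

lemma dle_letter_up: "x \<le> y \<Longrightarrow> y < k \<Longrightarrow> dle k (y - x) [x] [y]"
proof (induction y)
  case 0 then show ?case by (simp add: dle_refl)
next
  case (Suc y)
  show ?case
  proof (cases "x = Suc y")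
    case True then show ?thesis by (simp add: dle_refl)
  next
    case False
    then have xy: "x \<le> y" "y < k" using Suc.prems by auto
    have d1: "dle k (y - x) [x] [y]" by (rule Suc.IH[OF xy])
    have "pell_adj k [y] [Suc y]" using adj_up Suc.prems by blast
    then have d2: "dle k 1 [y] [Suc y]" by (rule dle_adj)
    have "Suc y - x = (y - x) + 1" using xy by simp
    then show ?thesis using dle_trans[OF d1 d2] by simp
  qed
qed

lemma dle_letter: "x < k \<Longrightarrow> y < k \<Longrightarrow> dle k (nat \<bar>int x - int y\<bar>) [x] [y]"
proof (cases "x \<le> y")
  case True
  assume "x < k" "y < k"
  have "nat \<bar>int x - int y\<bar> = y - x" using True by auto
  then show ?thesis using dle_letter_up[OF True \<open>y < k\<close>] by metis
next
  case False
  assume "x < k" "y < k"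
  then have "dle k (x - y) [y] [x]" using dle_letter_up[of y x k] False by simp
  have "nat \<bar>int x - int y\<bar> = x - y" using False by auto
  then show ?thesis using dle_sym[OF \<open>dle k (x - y) [y] [x]\<close>] by metis
qed

lemma dle_pair: "x < k \<Longrightarrow> y < k \<Longrightarrow> dle k ((k - 1 - x) + (k - 1 - y) + 1) [x, y] [k, k]"
proof -
  assume x: "x < k" and y: "y < k"
  obtain K where K: "k = Suc K" using x by (cases k) auto
  have k1: "k - 1 = K" using K by simp
  have xk: "x < k" "k - 1 < k" using x by auto
  have py: "pell_word k [y]" "pell_word k [k-1]" using y x by auto
  have d1: "dle k (nat \<bar>int x - int (k-1)\<bar>) [x, y] [k-1, y]"
    using dle_ctx[OF dle_letter[OF xk], of "[]" "[y]"] py by simp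
  have d2: "dle k (nat \<bar>int y - int (k-1)\<bar>) [k-1, y] [k-1, k-1]"
    using dle_ctx[OF dle_letter[OF y xk(2)], of "[k-1]" "[]"] py by simp
  have "pell_adj k [k-1,k-1] [k,k]"
  proof -
    have "pell_step2 k [k-1,k-1] [k,k]" unfolding pell_step2_def by (intro exI[of _ "[]"]) auto
    moreover have "pell_word k [k-1,k-1]" "pell_word k [k,k]" using x by auto
    ultimately show ?thesis unfolding pell_adj_def by blast
  qed
  then have d3: "dle k 1 [k-1,k-1] [k,k]" by (rule dle_adj)
  have "dle k (nat \<bar>int x - int (k-1)\<bar> + nat \<bar>int y - int (k-1)\<bar> + 1) [x, y] [k, k]"
    by (rule dle_trans[OF dle_trans[OF d1 d2] d3])
  moreover have "nat \<bar>int x - int (k-1)\<bar> + nat \<bar>int y - int (k-1)\<bar> + 1 = (k - 1 - x) + (k - 1 - y) + 1"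
    using x y by auto
  ultimately show ?thesis by metis
qed

lemma upper_path:
  "pell_word k v \<Longrightarrow> length u = length v \<Longrightarrow> set u \<subseteq> {..<k} \<Longrightarrow> \<exists>m. dle k m u v \<and> 2 * int m \<le> Dl k u v"
proof (induction k v arbitrary: u rule: pell_word.induct)
  case (1 k)
  then show ?case by (auto intro: dle_refl)
next
  case (2 k x xs)
  show ?case
  proof (cases "x = k")
    case True
    with 2 obtain xs' where xs: "xs = k # xs'" "pell_word k xs'" by (auto split: list.splits)
    with 2 obtain y1 y2 us where u: "u = y1 # y2 # us" by (cases u; cases "tl u"; auto)
    have y: "y1 < k" "y2 < k" "set us \<subseteq> {..<k}" using 2(5) u by auto
    obtain m where m: "dle k m us xs'" "2 * int m \<le> Dl k us xs'"
      using 2(1)[OF True xs(1) xs(2)] 2(4) u xs y by auto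
    have d1: "dle k ((k - 1 - y1) + (k - 1 - y2) + 1) (y1 # y2 # us) (k # k # us)"
      using dle_ctx[OF dle_pair[OF y(1,2)], of "[]" us] pell_word_lt[OF y(3)] by simp
    have d2: "dle k m (k # k # us) (k # k # xs')"
      using dle_ctx[OF m(1), of "[k,k]" "[]"] by simp
    have "dle k ((k - 1 - y1) + (k - 1 - y2) + 1 + m) u (x # xs)"
      using dle_trans[OF d1 d2] u xs True by simp
    moreover have "2 * int ((k - 1 - y1) + (k - 1 - y2) + 1 + m) \<le> Dl k u (x # xs)"
    proof -
      have e: "FF k y1 = 2 * int y1" "FF k y2 = 2 * int y2" "FF k k = 2 * int k - 1"
        using y by (auto simp: FF_def)
      have "Dl k u (x # xs) = \<bar>FF k y1 - FF k k\<bar> + \<bar>FF k y2 - FF k k\<bar> + Dl k us xs'"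
        using u xs True by simp
      also have "\<dots> = (2 * int k - 1 - 2 * int y1) + (2 * int k - 1 - 2 * int y2) + Dl k us xs'"
        using y unfolding e by simp
      finally show ?thesis using m(2) y by (simp add: of_nat_diff)
    qed
    ultimately show ?thesis by blast
  next
    case False
    with 2 have x: "x < k" "pell_word k xs" by auto
    with 2 obtain y us where u: "u = y # us" by (cases u) auto
    have y: "y < k" "set us \<subseteq> {..<k}" using 2(5) u by auto
    obtain m where m: "dle k m us xs" "2 * int m \<le> Dl k us xs"
      using 2(2)[OF False x(2)] 2(4) u y by auto
    have d1: "dle k (nat \<bar>int y - int x\<bar>) (y # us) (x # us)"
      using dle_ctx[OF dle_letter[OF y(1) x(1)], of "[]" us] pell_word_lt[OF y(2)] by simp
    have d2: "dle k m (x # us) (x # xs)"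
      using dle_ctx[OF m(1), of "[x]" "[]"] x by simp
    have "dle k (nat \<bar>int y - int x\<bar> + m) u (x # xs)"
      using dle_trans[OF d1 d2] u by simp
    moreover have "2 * int (nat \<bar>int y - int x\<bar> + m) \<le> Dl k u (x # xs)"
    proof -
      have e: "FF k y = 2 * int y" "FF k x = 2 * int x" using x y by (auto simp: FF_def)
      have "Dl k u (x # xs) = \<bar>FF k y - FF k x\<bar> + Dl k us xs" using u by simp
      also have "\<dots> = 2 * \<bar>int y - int x\<bar> + Dl k us xs" unfolding e by arith
      finally show ?thesis using m(2) by simp
    qed
    ultimately show ?thesis by blast
  qed
qed



definition AA :: "nat \<Rightarrow> nat" where "AA k = (k - 1) div 2"
definition bt :: "nat \<Rightarrow> nat" where "bt k = (if even k then 0 else 1)"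
definition cc :: "nat \<Rightarrow> int" where "cc k = 2 * int k - 2 - 2 * int (AA k)"
definition farl :: "nat \<Rightarrow> nat \<Rightarrow> nat" where "farl k x = (if x \<le> AA k then k - 1 else 0)"
definition ab :: "nat \<Rightarrow> nat \<Rightarrow> nat" where "ab k x = (if x \<le> AA k then AA k else Suc (AA k))"

fun gv :: "nat \<Rightarrow> nat list \<Rightarrow> nat list" where
  "gv k (x # y # ys) = (if x \<le> AA k \<and> y \<le> AA k then k # k # gv k ys else farl k x # gv k (y # ys))"
| "gv k [x] = [farl k x]"
| "gv k [] = []"

fun Q :: "nat \<Rightarrow> nat \<Rightarrow> nat list \<Rightarrow> nat" where
  "Q a b (x # y # ys) = (if x = a \<and> y = a then 1 + Q a b ys else (if x = Suc a then b else 0) + Q a b (y # ys))"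
| "Q a b [x] = (if x = Suc a then b else 0)"
| "Q a b [] = 0"

lemma par: "k \<ge> 2 \<Longrightarrow> (even k \<and> k = 2 * AA k + 2 \<and> bt k = 0 \<and> cc k = int k) \<or>
   (odd k \<and> k = 2 * AA k + 1 \<and> bt k = 1 \<and> cc k = int k - 1 \<and> k \<ge> 3)"
  unfolding AA_def bt_def cc_def by presburger

lemma gv_len: "length (gv k u) = length u"
  by (induction k u rule: gv.induct) auto

lemma gv_pell: "k \<ge> 2 \<Longrightarrow> pell_word k (gv k u)"
  by (induction k u rule: gv.induct) (auto simp: farl_def)

lemma Q_b: "Q a b (Suc a # w) = b + Q a b w"
  by (cases w) auto

lemma Q_a: "Q a b w \<le> Q a b (a # w) \<and> Q a b (a # w) \<le> 1 + Q a b w"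
proof (induction "length w" arbitrary: w rule: less_induct)
  case less
  show ?case
  proof (cases w)
    case Nil then show ?thesis by simp
  next
    case (Cons z w')
    show ?thesis
    proof (cases "z = a")
      case True
      have "Q a b w' \<le> Q a b (a # w') \<and> Q a b (a # w') \<le> 1 + Q a b w'" using less Cons by simp
      then show ?thesis using Cons True by simp
    next
      case False
      then show ?thesis using Cons by simp
    qed
  qed
qed

lemma Q_cons_ge: "(if x = Suc a then b else 0) + Q a b w \<le> Q a b (x # w)"
proof (cases "x = Suc a")
  case True then show ?thesis by (simp add: Q_b)
next
  case False
  show ?thesis
  proof (cases "x = a")
    case True then show ?thesis using Q_a[of a b w] by simp
  next
    case False2: False
    then show ?thesis using False by (cases w) auto
  qed
qed

lemma Q_lower: "set w \<subseteq> {a, Suc a} \<Longrightarrow> length w div 2 \<le> Q a 1 w"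
proof (induction "length w" arbitrary: w rule: less_induct)
  case less
  show ?case
  proof (cases w)
    case Nil then show ?thesis by simp
  next
    case (Cons x w')
    show ?thesis
    proof (cases w')
      case Nil then show ?thesis using Cons by simp
    next
      case (Cons y ys)
      note Cons2 = this
      note Cons = \<open>w = x # w'\<close>
      have ih1: "length ys div 2 \<le> Q a 1 ys" using less(1)[of ys] less.prems Cons Cons2 by auto
      have ih2: "length w' div 2 \<le> Q a 1 w'" using less(1)[of w'] less.prems Cons Cons2 by auto
      have "x = a \<or> x = Suc a" "y = a \<or> y = Suc a" using less.prems Cons Cons2 by auto
      then show ?thesis
      proof (elim disjE)
        assume "x = a" "y = a" then show ?thesis using Cons Cons2 ih1 by simp
      next
        assume "x = a" "y = Suc a" then show ?thesis using Cons Cons2 ih1 by (simp add: Q_b)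
      next
        assume "x = Suc a" then show ?thesis using Cons Cons2 ih2 by (simp add: Q_b)
      next
        assume "x = Suc a" then show ?thesis using Cons Cons2 ih2 by (simp add: Q_b)
      qed
    qed
  qed
qed

lemma far_ge:
  assumes k: "k \<ge> 2" and x: "x \<le> k"
  shows "\<bar>FF k x - FF k (farl k x)\<bar> \<ge> cc k + 2 * int (if ab k x = Suc (AA k) then bt k else 0)
           + (if x \<in> {AA k, Suc (AA k)} then 0 else 1)"
proof -
  have fk: "farl k x < k" using k unfolding farl_def by auto
  have f1: "FF k (farl k x) = 2 * int (farl k x)" using fk by (simp add: FF_def)
  show ?thesis
  proof (cases "x = k")
    case True
    then have "\<not> x \<le> AA k" "x \<noteq> AA k" "x \<noteq> Suc (AA k)" using par[OF k] by auto
    then show ?thesis using True f1 par[OF k] by (auto simp: FF_def farl_def ab_def)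
  next
    case False
    then have fx: "FF k x = 2 * int x" by (simp add: FF_def)
    show ?thesis
    proof (cases "x \<le> AA k")
      case True
      then show ?thesis using fx f1 par[OF k] k by (auto simp: farl_def ab_def)
    next
      case False2: False
      then show ?thesis using fx f1 par[OF k] k by (auto simp: farl_def ab_def)
    qed
  qed
qed

lemma pair_ge:
  assumes k: "k \<ge> 2" and x: "x \<le> AA k" and y: "y \<le> AA k"
  shows "\<bar>FF k x - FF k k\<bar> + \<bar>FF k y - FF k k\<bar> \<ge> 2 * cc k + 2 + (if x = AA k \<and> y = AA k then 0 else 1)"
proof -
  have "x \<noteq> k" "y \<noteq> k" using x y par[OF k] by auto
  then have e: "FF k x = 2 * int x" "FF k y = 2 * int y" "FF k k = 2 * int k - 1" by (auto simp: FF_def)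
  show ?thesis unfolding e using x y par[OF k] unfolding cc_def by auto
qed



lemma ab_a: "ab k x = AA k \<longleftrightarrow> x \<le> AA k" by (simp add: ab_def)
lemma ab_b: "ab k x = Suc (AA k) \<longleftrightarrow> \<not> x \<le> AA k" by (simp add: ab_def)

lemma low:
  "k \<ge> 2 \<Longrightarrow> set u \<subseteq> {..k} \<Longrightarrow> Dl k u (gv k u) \<ge> int (length u) * cc k + 2 * int (Q (AA k) (bt k) (map (ab k) u))
           + (if set u \<subseteq> {AA k, Suc (AA k)} then 0 else 1)"
proof (induction k u rule: gv.induct)
  case (1 k x y ys)
  note k = 1(3)
  show ?case
  proof (cases "x \<le> AA k \<and> y \<le> AA k")
    case True
    have ih: "Dl k ys (gv k ys) \<ge> int (length ys) * cc k + 2 * int (Q (AA k) (bt k) (map (ab k) ys))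
           + (if set ys \<subseteq> {AA k, Suc (AA k)} then 0 else 1)" using 1(1)[OF True k] 1(4) by auto
    have p: "\<bar>FF k x - FF k k\<bar> + \<bar>FF k y - FF k k\<bar> \<ge> 2 * cc k + 2 + (if x = AA k \<and> y = AA k then 0 else 1)"
      using pair_ge[OF k] True by blast
    have d: "Dl k (x # y # ys) (gv k (x # y # ys)) = \<bar>FF k x - FF k k\<bar> + \<bar>FF k y - FF k k\<bar> + Dl k ys (gv k ys)"
      using True by simp
    have q: "Q (AA k) (bt k) (map (ab k) (x # y # ys)) = 1 + Q (AA k) (bt k) (map (ab k) ys)"
      using True by (simp add: ab_def)
    have e: "(if set (x # y # ys) \<subseteq> {AA k, Suc (AA k)} then 0 else 1) \<le>
        (if x = AA k \<and> y = AA k then 0 else 1) + (if set ys \<subseteq> {AA k, Suc (AA k)} then (0::int) else 1)"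
      by auto
    show ?thesis unfolding d q using ih p e by (simp add: algebra_simps)
  next
    case False
    have ih: "Dl k (y # ys) (gv k (y # ys)) \<ge> int (length (y # ys)) * cc k + 2 * int (Q (AA k) (bt k) (map (ab k) (y # ys)))
           + (if set (y # ys) \<subseteq> {AA k, Suc (AA k)} then 0 else 1)" using 1(2)[OF False k] 1(4) by auto
    have xk: "x \<le> k" using 1(4) by auto
    have p: "\<bar>FF k x - FF k (farl k x)\<bar> \<ge> cc k + 2 * int (if ab k x = Suc (AA k) then bt k else 0)
           + (if x \<in> {AA k, Suc (AA k)} then 0 else 1)" by (rule far_ge[OF k xk])
    have g: "gv k (x # y # ys) = farl k x # gv k (y # ys)"
      by (subst gv.simps(1)) (rule if_not_P[OF False])
    have d: "Dl k (x # y # ys) (gv k (x # y # ys)) = \<bar>FF k x - FF k (farl k x)\<bar> + Dl k (y # ys) (gv k (y # ys))"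
      unfolding g by simp
    have q: "Q (AA k) (bt k) (map (ab k) (x # y # ys)) = (if ab k x = Suc (AA k) then bt k else 0) + Q (AA k) (bt k) (map (ab k) (y # ys))"
      using False by (auto simp: ab_def)
    have e: "(if set (x # y # ys) \<subseteq> {AA k, Suc (AA k)} then 0 else 1) \<le>
        (if x \<in> {AA k, Suc (AA k)} then 0 else 1) + (if set (y # ys) \<subseteq> {AA k, Suc (AA k)} then (0::int) else 1)"
      by auto
    show ?thesis unfolding d q using ih p e by (simp add: algebra_simps)
  qed
next
  case (2 k x)
  have xk: "x \<le> k" using 2 by auto
  have p: "\<bar>FF k x - FF k (farl k x)\<bar> \<ge> cc k + 2 * int (if ab k x = Suc (AA k) then bt k else 0)
           + (if x \<in> {AA k, Suc (AA k)} then 0 else 1)" by (rule far_ge[OF 2(1) xk])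
  have q: "Q (AA k) (bt k) (map (ab k) [x]) = (if ab k x = Suc (AA k) then bt k else 0)" by simp
  show ?case unfolding q using p by simp
next
  case (3 k)
  then show ?case by simp
qed

lemma far_le:
  assumes k: "k \<ge> 2" and x: "x = AA k \<or> x = Suc (AA k)" and w: "w < k"
  shows "\<bar>FF k x - FF k w\<bar> \<le> cc k + 2 * int (if x = Suc (AA k) then bt k else 0)"
proof -
  have "x \<noteq> k" using x par[OF k] by auto
  then have e: "FF k x = 2 * int x" "FF k w = 2 * int w" using w by (auto simp: FF_def)
  show ?thesis unfolding e using x w par[OF k] by auto
qed

lemma pair_le:
  assumes k: "k \<ge> 2" and x: "x = AA k \<or> x = Suc (AA k)" and y: "y = AA k \<or> y = Suc (AA k)"
  shows "\<bar>FF k x - FF k k\<bar> + \<bar>FF k y - FF k k\<bar> \<le> 2 * cc k + 2 * int (if x = AA k \<and> y = AA k then 1 else 0)"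
proof -
  have "x \<noteq> k" "y \<noteq> k" using x y par[OF k] by auto
  then have e: "FF k x = 2 * int x" "FF k y = 2 * int y" "FF k k = 2 * int k - 1" by (auto simp: FF_def)
  show ?thesis unfolding e using x y par[OF k] by auto
qed

lemma Q_pair_ge: "(if x = a \<and> y = a then 1 else 0) + Q a b ys \<le> Q a b (x # y # ys)"
proof (cases "x = a \<and> y = a")
  case True then show ?thesis by simp
next
  case False
  have "Q a b ys \<le> Q a b (y # ys)" using Q_cons_ge[of y a b ys] by simp
  moreover have "Q a b (y # ys) \<le> Q a b (x # y # ys)" using Q_cons_ge[of x a b "y # ys"] by simp
  moreover have "(if x = a \<and> y = a then 1 else 0) = (0::nat)" using False by simp
  ultimately show ?thesis by linarith
qed

lemma upper:
  "k \<ge> 2 \<Longrightarrow> pell_word k v \<Longrightarrow> length u = length v \<Longrightarrow> set u \<subseteq> {AA k, Suc (AA k)} \<Longrightarrow>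
     Dl k u v \<le> int (length u) * cc k + 2 * int (Q (AA k) (bt k) u)"
proof (induction k v arbitrary: u rule: pell_word.induct)
  case (1 k)
  then show ?case by simp
next
  case (2 k x xs)
  note k = 2(3)
  show ?case
  proof (cases "x = k")
    case True
    with 2 obtain xs' where xs: "xs = k # xs'" "pell_word k xs'" by (auto split: list.splits)
    with 2 obtain y1 y2 us where u: "u = y1 # y2 # us" by (cases u; cases "tl u"; auto)
    have y: "y1 = AA k \<or> y1 = Suc (AA k)" "y2 = AA k \<or> y2 = Suc (AA k)" "set us \<subseteq> {AA k, Suc (AA k)}"
      using 2(6) u by auto
    have ih: "Dl k us xs' \<le> int (length us) * cc k + 2 * int (Q (AA k) (bt k) us)"
      using 2(1)[OF True xs(1) k xs(2)] 2(5) u xs y(3) by auto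
    have p: "\<bar>FF k y1 - FF k k\<bar> + \<bar>FF k y2 - FF k k\<bar> \<le> 2 * cc k + 2 * int (if y1 = AA k \<and> y2 = AA k then 1 else 0)"
      by (rule pair_le[OF k y(1,2)])
    have q: "(if y1 = AA k \<and> y2 = AA k then 1 else 0) + Q (AA k) (bt k) us \<le> Q (AA k) (bt k) u"
      unfolding u by (rule Q_pair_ge)
    have d: "Dl k u (x # xs) = \<bar>FF k y1 - FF k k\<bar> + \<bar>FF k y2 - FF k k\<bar> + Dl k us xs'"
      using u xs True by simp
    show ?thesis unfolding d using ih p q u by (simp add: algebra_simps)
  next
    case False
    with 2 have x: "x < k" "pell_word k xs" by auto
    with 2 obtain y us where u: "u = y # us" by (cases u) auto
    have y: "y = AA k \<or> y = Suc (AA k)" "set us \<subseteq> {AA k, Suc (AA k)}" using 2(6) u by auto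
    have ih: "Dl k us xs \<le> int (length us) * cc k + 2 * int (Q (AA k) (bt k) us)"
      using 2(2)[OF False k x(2)] 2(5) u y(2) by auto
    have p: "\<bar>FF k y - FF k x\<bar> \<le> cc k + 2 * int (if y = Suc (AA k) then bt k else 0)"
      by (rule far_le[OF k y(1) x(1)])
    have q: "(if y = Suc (AA k) then bt k else 0) + Q (AA k) (bt k) us \<le> Q (AA k) (bt k) u"
      unfolding u by (rule Q_cons_ge)
    have d: "Dl k u (x # xs) = \<bar>FF k y - FF k x\<bar> + Dl k us xs" using u by simp
    show ?thesis unfolding d using ih p q u by (simp add: algebra_simps)
  qed
qed



definition Cset :: "nat \<Rightarrow> nat \<Rightarrow> nat list set" where
  "Cset k n = {u. length u = n \<and> set u \<subseteq> {AA k, Suc (AA k)} \<and> Q (AA k) (bt k) u \<le> bt k * (n div 2)}"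

definition half :: "nat \<Rightarrow> nat" where "half k = (if even k then Suc (AA k) else AA k)"

lemma cc_half: "k \<ge> 2 \<Longrightarrow> cc k = 2 * int (half k)"
  using par[of k] unfolding half_def by auto

lemma V_finite: "finite (pell_vertices n k)"
proof -
  have "pell_vertices n k \<subseteq> {w. set w \<subseteq> {..k} \<and> length w = n}"
    unfolding pell_vertices_def using pell_word_le by blast
  moreover have "finite {w. set w \<subseteq> {..k} \<and> length w = n}"
    by (rule finite_lists_length_eq) simp
  ultimately show ?thesis by (rule finite_subset)
qed

lemma ecc_le: "u \<in> pell_vertices n k \<Longrightarrow> (\<And>v. v \<in> pell_vertices n k \<Longrightarrow> gdist (pell_adj k) u v \<le> R)
   \<Longrightarrow> ecc (pell_vertices n k) (pell_adj k) u \<le> R"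
  unfolding ecc_def using V_finite by (subst Max_le_iff) auto

lemma ecc_ge: "v \<in> pell_vertices n k \<Longrightarrow> gdist (pell_adj k) u v \<le> ecc (pell_vertices n k) (pell_adj k) u"
  unfolding ecc_def using V_finite by (intro Max_ge) auto

lemma conn:
  assumes k: "k \<ge> 2" and u: "u \<in> pell_vertices n k" and v: "v \<in> pell_vertices n k"
  shows "\<exists>m. dle k m u v"
proof -
  let ?z = "replicate n (0::nat)"
  have z: "set ?z \<subseteq> {..<k}" using k by auto
  obtain m1 where m1: "dle k m1 ?z u" using upper_path[of k u ?z] u z unfolding pell_vertices_def by auto
  obtain m2 where m2: "dle k m2 ?z v" using upper_path[of k v ?z] v z unfolding pell_vertices_def by auto
  show ?thesis using dle_trans[OF dle_sym[OF m1] m2] by blast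
qed

lemma gdist_low:
  assumes k: "k \<ge> 2" and u: "u \<in> pell_vertices n k" and v: "v \<in> pell_vertices n k"
  shows "Dl k u v \<le> 2 * int (gdist (pell_adj k) u v)"
proof -
  obtain m where "dle k m u v" using conn[OF k u v] by blast
  then show ?thesis using Dl_path[OF k gdist_path] by blast
qed

lemma Q_rep_b: "Q a 0 (replicate n (Suc a)) = 0"
  by (induction n) (auto simp: Q_b)

lemma Q_rep_a: "Q a b (replicate n a) = n div 2"
proof (induction n rule: less_induct)
  case (less n)
  show ?case
  proof (cases n)
    case 0 then show ?thesis by simp
  next
    case (Suc m)
    show ?thesis
    proof (cases m)
      case 0 then show ?thesis using Suc by simp
    next
      case (Suc j)
      then show ?thesis using less[of j] \<open>n = Suc m\<close> by simp
    qed
  qed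
qed

lemma ab_id: "set u \<subseteq> {AA k, Suc (AA k)} \<Longrightarrow> map (ab k) u = u"
  by (induction u) (auto simp: ab_def)

theorem center_eq:
  assumes k: "k \<ge> 2"
  shows "pell_center n k = Cset k n"
proof -
  let ?V = "pell_vertices n k" and ?E = "pell_adj k"
  define R where "R = n * half k + bt k * (n div 2)"
  have R2: "2 * int R = int n * cc k + 2 * int (bt k * (n div 2))"
    unfolding R_def using cc_half[OF k] by simp
  have lt: "AA k < k" "Suc (AA k) < k" using par[OF k] by auto
  have CV: "u \<in> ?V" if "u \<in> Cset k n" for u
  proof -
    have "set u \<subseteq> {..<k}" using that lt unfolding Cset_def by auto
    then show ?thesis using that pell_word_lt unfolding Cset_def pell_vertices_def by auto
  qed
  have Cecc: "ecc ?V ?E u \<le> R" if u: "u \<in> Cset k n" for u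
  proof (rule ecc_le[OF CV[OF u]])
    fix v assume v: "v \<in> ?V"
    have su: "set u \<subseteq> {..<k}" using u lt unfolding Cset_def by auto
    have lu: "length u = length v" using u v unfolding Cset_def pell_vertices_def by auto
    obtain m where m: "dle k m u v" "2 * int m \<le> Dl k u v"
      using upper_path[OF _ lu su] v unfolding pell_vertices_def by auto
    have "Dl k u v \<le> int (length u) * cc k + 2 * int (Q (AA k) (bt k) u)"
      using upper[OF k _ lu] u v unfolding Cset_def pell_vertices_def by auto
    also have "\<dots> \<le> 2 * int R"
    proof -
      have "Q (AA k) (bt k) u \<le> bt k * (n div 2)" "length u = n" using u unfolding Cset_def by auto
      then show ?thesis unfolding R2 by (simp only: of_nat_le_iff[symmetric])
    qed
    finally have "m \<le> R" using m(2) by linarith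
    then show "gdist ?E u v \<le> R" using dle_gdist[OF m(1)] by linarith
  qed
  have Vecc: "int R + (if u \<in> Cset k n then 0 else 1) \<le> int (ecc ?V ?E u)" if u: "u \<in> ?V" for u
  proof -
    let ?g = "gv k u"
    have lu: "length u = n" and su: "set u \<subseteq> {..k}" using u pell_word_le unfolding pell_vertices_def by auto
    have g: "?g \<in> ?V" using gv_len[of k u] gv_pell[OF k] lu unfolding pell_vertices_def by auto
    have l: "Dl k u ?g \<ge> int n * cc k + 2 * int (Q (AA k) (bt k) (map (ab k) u))
           + (if set u \<subseteq> {AA k, Suc (AA k)} then 0 else 1)" using low[OF k su] lu by simp
    have sm: "set (map (ab k) u) \<subseteq> {AA k, Suc (AA k)}" by (auto simp: ab_def)
    have ql: "bt k * (n div 2) \<le> Q (AA k) (bt k) (map (ab k) u)"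
    proof (cases "bt k = 0")
      case True then show ?thesis by simp
    next
      case False
      then have "bt k = 1" unfolding bt_def by (auto split: if_splits)
      then show ?thesis using Q_lower[OF sm] lu by simp
    qed
    have extra: "2 * int (bt k * (n div 2)) + (if u \<in> Cset k n then 0 else 1) \<le>
        2 * int (Q (AA k) (bt k) (map (ab k) u)) + (if set u \<subseteq> {AA k, Suc (AA k)} then 0 else 1)"
    proof (cases "set u \<subseteq> {AA k, Suc (AA k)}")
      case True
      then have mu: "map (ab k) u = u" by (rule ab_id)
      define X where "X = bt k * (n div 2)"
      define Y where "Y = Q (AA k) (bt k) u"
      have "X \<le> Y" using ql mu unfolding X_def Y_def by simp
      moreover have "u \<notin> Cset k n \<Longrightarrow> X < Y" using True lu \<open>X \<le> Y\<close> unfolding X_def Y_def Cset_def by auto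
      ultimately have "2 * int X + (if u \<in> Cset k n then 0 else 1) \<le> 2 * int Y" by auto
      then show ?thesis using True mu unfolding X_def Y_def by simp
    next
      case False
      define X where "X = bt k * (n div 2)"
      define Y where "Y = Q (AA k) (bt k) (map (ab k) u)"
      have "X \<le> Y" using ql unfolding X_def Y_def by simp
      then have "2 * int X + 1 \<le> 2 * int Y + 1" by simp
      then show ?thesis using False unfolding X_def[symmetric] Y_def[symmetric] by auto
    qed
    have "Dl k u ?g \<le> 2 * int (gdist ?E u ?g)" by (rule gdist_low[OF k u g])
    also have "\<dots> \<le> 2 * int (ecc ?V ?E u)" using ecc_ge[OF g, of u] by simp
    finally have "Dl k u ?g \<le> 2 * int (ecc ?V ?E u)" .
    then show ?thesis using l extra R2 by (auto split: if_splits)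
  qed
  define w0 where "w0 = (if even k then replicate n (Suc (AA k)) else replicate n (AA k))"
  have w0: "w0 \<in> Cset k n"
  proof (cases "even k")
    case True
    then have "bt k = 0" unfolding bt_def by simp
    then show ?thesis using True unfolding w0_def Cset_def by (auto simp: Q_rep_b)
  next
    case False
    then have "bt k = 1" unfolding bt_def by simp
    then show ?thesis using False unfolding w0_def Cset_def by (auto simp: Q_rep_a)
  qed
  show ?thesis
  proof
    show "pell_center n k \<subseteq> Cset k n"
    proof
      fix v assume v: "v \<in> pell_center n k"
      then have vV: "v \<in> ?V" and le: "ecc ?V ?E v \<le> ecc ?V ?E w0"
        using CV[OF w0] unfolding pell_center_def center_def by auto
      show "v \<in> Cset k n"
      proof (rule ccontr)
        assume "v \<notin> Cset k n"
        then have "int R + 1 \<le> int (ecc ?V ?E v)" using Vecc[OF vV] by simp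
        moreover have "ecc ?V ?E w0 \<le> R" by (rule Cecc[OF w0])
        ultimately show False using le by linarith
      qed
    qed
  next
    show "Cset k n \<subseteq> pell_center n k"
    proof
      fix c assume c: "c \<in> Cset k n"
      have "ecc ?V ?E c \<le> ecc ?V ?E u" if "u \<in> ?V" for u
        using Cecc[OF c] Vecc[OF that] by (auto split: if_splits)
      then show "c \<in> pell_center n k" using CV[OF c] unfolding pell_center_def center_def by auto
    qed
  qed
qed



lemma adj_cons: "(\<forall>i. Suc i < length (x # xs) \<longrightarrow> P ((x # xs) ! i) ((x # xs) ! Suc i)) \<longleftrightarrow>
   (xs \<noteq> [] \<longrightarrow> P x (hd xs)) \<and> (\<forall>i. Suc i < length xs \<longrightarrow> P (xs ! i) (xs ! Suc i))"
proof
  assume h: "\<forall>i. Suc i < length (x # xs) \<longrightarrow> P ((x # xs) ! i) ((x # xs) ! Suc i)"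
  have "xs \<noteq> [] \<longrightarrow> P x (hd xs)" using h[rule_format, of 0] by (cases xs) auto
  moreover have "\<forall>i. Suc i < length xs \<longrightarrow> P (xs ! i) (xs ! Suc i)"
  proof (intro allI impI)
    fix i assume "Suc i < length xs"
    then show "P (xs ! i) (xs ! Suc i)" using h[rule_format, of "Suc i"] by simp
  qed
  ultimately show "(xs \<noteq> [] \<longrightarrow> P x (hd xs)) \<and> (\<forall>i. Suc i < length xs \<longrightarrow> P (xs ! i) (xs ! Suc i))" by blast
next
  assume h: "(xs \<noteq> [] \<longrightarrow> P x (hd xs)) \<and> (\<forall>i. Suc i < length xs \<longrightarrow> P (xs ! i) (xs ! Suc i))"
  show "\<forall>i. Suc i < length (x # xs) \<longrightarrow> P ((x # xs) ! i) ((x # xs) ! Suc i)"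
  proof (intro allI impI)
    fix i assume i: "Suc i < length (x # xs)"
    show "P ((x # xs) ! i) ((x # xs) ! Suc i)"
    proof (cases i)
      case 0 then show ?thesis using h i by (cases xs) auto
    next
      case (Suc j) then show ?thesis using h i by simp
    qed
  qed
qed

lemma Q0: "Q a 0 u = 0 \<longleftrightarrow> (\<forall>i. Suc i < length u \<longrightarrow> \<not> (u ! i = a \<and> u ! Suc i = a))"
proof (induction u)
  case Nil then show ?case by simp
next
  case (Cons x xs)
  show ?case
  proof (cases xs)
    case Nil then show ?thesis by simp
  next
    case (Cons y ys)
    have "Q a 0 (x # y # ys) = (if x = a \<and> y = a then 1 + Q a 0 ys else Q a 0 (y # ys))" by simp
    then show ?thesis using Cons.IH Cons adj_cons[of x xs "\<lambda>p q. \<not> (p = a \<and> q = a)"] by auto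
  qed
qed

definition Nset :: "nat \<Rightarrow> nat \<Rightarrow> nat list set" where
  "Nset a n = {u. length u = n \<and> set u \<subseteq> {a, Suc a} \<and> Q a 0 u = 0}"

lemma Nset_finite: "finite (Nset a n)"
proof -
  have "Nset a n \<subseteq> {u. set u \<subseteq> {a, Suc a} \<and> length u = n}" unfolding Nset_def by auto
  moreover have "finite {u. set u \<subseteq> {a, Suc a} \<and> length u = n}" by (rule finite_lists_length_eq) simp
  ultimately show ?thesis by (rule finite_subset)
qed

lemma Nset_rec: "Nset a (Suc (Suc n)) = Cons (Suc a) ` Nset a (Suc n) \<union> (\<lambda>w. a # Suc a # w) ` Nset a n"
proof
  show "Nset a (Suc (Suc n)) \<subseteq> Cons (Suc a) ` Nset a (Suc n) \<union> (\<lambda>w. a # Suc a # w) ` Nset a n"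
  proof
    fix u assume u: "u \<in> Nset a (Suc (Suc n))"
    then obtain x y w where xyw: "u = x # y # w" unfolding Nset_def
      by (cases u; cases "tl u") auto
    have xy: "x = a \<or> x = Suc a" "y = a \<or> y = Suc a" "set w \<subseteq> {a, Suc a}" "length w = n"
      using u xyw unfolding Nset_def by auto
    have q: "Q a 0 (x # y # w) = 0" using u xyw unfolding Nset_def by simp
    show "u \<in> Cons (Suc a) ` Nset a (Suc n) \<union> (\<lambda>w. a # Suc a # w) ` Nset a n"
    proof (cases "x = Suc a")
      case True
      then have "Q a 0 (y # w) = 0" using q by simp
      then have "y # w \<in> Nset a (Suc n)" using xy unfolding Nset_def by auto
      then show ?thesis using xyw True by auto
    next
      case False
      then have xa: "x = a" using xy by auto
      then have ya: "y = Suc a" using q xy by auto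
      have "Q a 0 w = 0" using q xa ya by (simp add: Q_b)
      then have "w \<in> Nset a n" using xy unfolding Nset_def by auto
      then show ?thesis using xyw xa ya by auto
    qed
  qed
next
  show "Cons (Suc a) ` Nset a (Suc n) \<union> (\<lambda>w. a # Suc a # w) ` Nset a n \<subseteq> Nset a (Suc (Suc n))"
    unfolding Nset_def by (auto simp: Q_b)
qed

lemma card_union_images:
  assumes "finite A" "finite B" "inj f" "inj g" "f ` A \<inter> g ` B = {}"
  shows "card (f ` A \<union> g ` B) = card A + card B"
  using assms by (simp add: card_Un_disjoint card_image inj_on_subset)

lemma Nset_card: "card (Nset a n) = fib (n + 2)"
proof (induction n rule: fib.induct)
  case 1
  have "Nset a 0 = {[]}" unfolding Nset_def by auto
  then show ?case by simp
next
  case 2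
  have "Nset a (Suc 0) = {[a], [Suc a]}" unfolding Nset_def by (auto simp: length_Suc_conv)
  then show ?case by (simp add: numeral_3_eq_3)
next
  case (3 n)
  have "card (Nset a (Suc (Suc n))) = card (Nset a (Suc n)) + card (Nset a n)"
    unfolding Nset_rec by (rule card_union_images) (auto simp: Nset_finite inj_def)
  then show ?case using 3 by (simp add: fib_plus_2)
qed

lemma even_ab: "even k \<Longrightarrow> k \<ge> 2 \<Longrightarrow> k div 2 - 1 = AA k \<and> k div 2 = Suc (AA k) \<and> bt k = 0 \<and> Suc (AA k) < k"
  unfolding AA_def bt_def by presburger

lemma Theta_idx: "even k \<Longrightarrow> k \<ge> 2 \<Longrightarrow> Theta n k = {w. length w = n \<and> set w \<subseteq> {AA k, Suc (AA k)} \<and>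
      (\<forall>i. Suc i < n \<longrightarrow> \<not> (w ! i = AA k \<and> w ! Suc i = AA k))}"
  unfolding Theta_def using even_ab[of k] by simp

lemma Theta_eq: "even k \<Longrightarrow> k \<ge> 2 \<Longrightarrow> Theta n k = Nset (AA k) n"
  unfolding Theta_idx Nset_def using Q0 by blast

lemma Cset_even: "even k \<Longrightarrow> k \<ge> 2 \<Longrightarrow> Cset k n = Nset (AA k) n"
  unfolding Cset_def Nset_def using even_ab[of k] by auto

lemma iso_even:
  assumes ev: "even k" and k: "k \<ge> 2"
  shows "graph_iso (Theta n k) (pell_adj k) (fib_cube_vertices n) fib_cube_adj"
proof -
  define a where "a = AA k"
  have ab: "Suc a < k" using even_ab[OF ev k] unfolding a_def by simp
  have T: "Theta n k = {w. length w = n \<and> set w \<subseteq> {a, Suc a} \<and>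
      (\<forall>i. Suc i < n \<longrightarrow> \<not> (w ! i = a \<and> w ! Suc i = a))}"
    unfolding a_def by (rule Theta_idx[OF ev k])
  define f :: "nat \<Rightarrow> nat" where "f x = (if x = a then 1 else 0)" for x
  define g :: "nat \<Rightarrow> nat" where "g y = (if y = 1 then a else Suc a)" for y
  have gf: "map g (map f u) = u" if "u \<in> Theta n k" for u
  proof -
    have "\<forall>x\<in>set u. g (f x) = x" using that unfolding T f_def g_def by auto
    then show ?thesis by (simp add: map_idI)
  qed
  have fg: "map f (map g v) = v" if "v \<in> fib_cube_vertices n" for v
  proof -
    have "\<forall>x\<in>set v. f (g x) = x" using that unfolding fib_cube_vertices_def f_def g_def by auto
    then show ?thesis by (simp add: map_idI)
  qed
  have fT: "map f u \<in> fib_cube_vertices n" if "u \<in> Theta n k" for u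
    using that unfolding T fib_cube_vertices_def f_def by auto
  have gF: "map g v \<in> Theta n k" if "v \<in> fib_cube_vertices n" for v
    using that unfolding T fib_cube_vertices_def g_def by auto
  have bij: "bij_betw (map f) (Theta n k) (fib_cube_vertices n)"
    by (rule bij_betw_byWitness[where f' = "map g"]) (use gf fg fT gF in auto)
  have adj: "pell_adj k u v \<longleftrightarrow> fib_cube_adj (map f u) (map f v)" if u: "u \<in> Theta n k" and v: "v \<in> Theta n k" for u v
  proof -
    have lu: "length u = n" "length v = n" using u v unfolding T by auto
    have su: "set u \<subseteq> {a, Suc a}" "set v \<subseteq> {a, Suc a}" using u v unfolding T by auto
    have pw: "pell_word k u" "pell_word k v" using su ab by (auto intro!: pell_word_lt)
    have nok: "k \<notin> set u" "k \<notin> set v" using su ab by auto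
    have no2: "\<not> pell_step2 k u v" "\<not> pell_step2 k v u" using nok unfolding pell_step2_def by auto
    define D where "D = {i. i < n \<and> u ! i \<noteq> v ! i}"
    have fD: "{i. i < length (map f u) \<and> map f u ! i \<noteq> map f v ! i} = D"
    proof -
      have feq: "f (u ! i) = f (v ! i) \<longleftrightarrow> u ! i = v ! i" if "i < n" for i
      proof -
        have "u ! i \<in> set u" "v ! i \<in> set v" using lu that by simp_all
        then have "u ! i \<in> {a, Suc a}" "v ! i \<in> {a, Suc a}" using su by blast+
        then show ?thesis unfolding f_def by (cases "u ! i = a"; cases "v ! i = a") auto
      qed
      show ?thesis
      proof (rule set_eqI)
        fix i
        show "i \<in> {i. i < length (map f u) \<and> map f u ! i \<noteq> map f v ! i} \<longleftrightarrow> i \<in> D"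
        proof (cases "i < n")
          case True
          have e1: "(i \<in> {i. i < length (map f u) \<and> map f u ! i \<noteq> map f v ! i}) = (map f u ! i \<noteq> map f v ! i)"
            using True lu by simp
          have e2: "(i \<in> D) = (u ! i \<noteq> v ! i)" using True unfolding D_def by simp
          have m: "map f u ! i = f (u ! i)" "map f v ! i = f (v ! i)" using True lu by simp_all
          show ?thesis unfolding e1 e2 m using feq[OF True] by blast
        next
          case False
          have l: "length (map f u) = n" using lu by simp
          show ?thesis unfolding D_def mem_Collect_eq l using False by blast
        qed
      qed
    qed
    have s1: "pell_step1 k u v \<or> pell_step1 k v u \<longleftrightarrow> (\<exists>i<n. (\<forall>j<n. j \<noteq> i \<longrightarrow> u ! j = v ! j) \<and> u ! i \<noteq> v ! i)"
    proof
      assume "pell_step1 k u v \<or> pell_step1 k v u"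
      then show "\<exists>i<n. (\<forall>j<n. j \<noteq> i \<longrightarrow> u ! j = v ! j) \<and> u ! i \<noteq> v ! i"
      proof
        assume "pell_step1 k u v"
        then obtain i where i: "i < length u" "\<forall>j < length u. j \<noteq> i \<longrightarrow> u ! j = v ! j" "v ! i = u ! i + 1"
          unfolding pell_step1_def by blast
        have "i < n" "\<forall>j<n. j \<noteq> i \<longrightarrow> u ! j = v ! j" "u ! i \<noteq> v ! i" using i lu by auto
        then show ?thesis by blast
      next
        assume "pell_step1 k v u"
        then obtain i where i: "i < length v" "\<forall>j < length v. j \<noteq> i \<longrightarrow> v ! j = u ! j" "u ! i = v ! i + 1"
          unfolding pell_step1_def by blast
        have "i < n" "\<forall>j<n. j \<noteq> i \<longrightarrow> u ! j = v ! j" "u ! i \<noteq> v ! i" using i lu by auto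
        then show ?thesis by blast
      qed
    next
      assume "\<exists>i<n. (\<forall>j<n. j \<noteq> i \<longrightarrow> u ! j = v ! j) \<and> u ! i \<noteq> v ! i"
      then obtain i where i: "i < n" "\<forall>j<n. j \<noteq> i \<longrightarrow> u ! j = v ! j" "u ! i \<noteq> v ! i" by blast
      have "u ! i \<in> set u" "v ! i \<in> set v" using lu i(1) by simp_all
      then have "u ! i \<in> {a, Suc a}" "v ! i \<in> {a, Suc a}" using su by blast+
      then have "(u ! i = a \<and> v ! i = Suc a) \<or> (v ! i = a \<and> u ! i = Suc a)" using i(3) by auto
      then show "pell_step1 k u v \<or> pell_step1 k v u"
      proof
        assume "u ! i = a \<and> v ! i = Suc a"
        then have "pell_step1 k u v" unfolding pell_step1_def using lu i ab by (intro conjI exI[of _ i]) auto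
        then show ?thesis by blast
      next
        assume "v ! i = a \<and> u ! i = Suc a"
        then have "pell_step1 k v u" unfolding pell_step1_def using lu i ab by (intro conjI exI[of _ i]) auto
        then show ?thesis by blast
      qed
    qed
    have c1: "card D = 1 \<longleftrightarrow> (\<exists>i<n. (\<forall>j<n. j \<noteq> i \<longrightarrow> u ! j = v ! j) \<and> u ! i \<noteq> v ! i)"
    proof
      assume "card D = 1"
      then obtain i where "D = {i}" by (auto simp: card_Suc_eq)
      then show "\<exists>i<n. (\<forall>j<n. j \<noteq> i \<longrightarrow> u ! j = v ! j) \<and> u ! i \<noteq> v ! i"
        unfolding D_def by (intro exI[of _ i]) (auto simp: set_eq_iff)
    next
      assume "\<exists>i<n. (\<forall>j<n. j \<noteq> i \<longrightarrow> u ! j = v ! j) \<and> u ! i \<noteq> v ! i"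
      then obtain i where i: "i < n" "\<forall>j<n. j \<noteq> i \<longrightarrow> u ! j = v ! j" "u ! i \<noteq> v ! i" by blast
      then have "D = {i}" unfolding D_def by auto
      then show "card D = 1" by simp
    qed
    have "pell_adj k u v \<longleftrightarrow> pell_step1 k u v \<or> pell_step1 k v u"
      unfolding pell_adj_def using pw no2 by blast
    also have "\<dots> \<longleftrightarrow> card D = 1" using s1 c1 by blast
    also have "\<dots> \<longleftrightarrow> fib_cube_adj (map f u) (map f v)"
      unfolding fib_cube_adj_def fD using lu by simp
    finally show ?thesis .
  qed
  show ?thesis unfolding graph_iso_def using bij adj by blast
qed



definition Tset :: "nat \<Rightarrow> nat \<Rightarrow> nat list set" where
  "Tset a n = {u. length u = n \<and> set u \<subseteq> {a, Suc a} \<and> Q a 1 u \<le> n div 2}"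

lemma Tset_finite: "finite (Tset a n)"
proof -
  have "Tset a n \<subseteq> {u. set u \<subseteq> {a, Suc a} \<and> length u = n}" unfolding Tset_def by auto
  moreover have "finite {u. set u \<subseteq> {a, Suc a} \<and> length u = n}" by (rule finite_lists_length_eq) simp
  ultimately show ?thesis by (rule finite_subset)
qed

lemma T_cons2: "x # y # w \<in> Tset a (Suc (Suc n)) \<longleftrightarrow>
   (x = a \<and> (y = a \<or> y = Suc a) \<and> w \<in> Tset a n) \<or> (x = Suc a \<and> even n \<and> y # w \<in> Tset a (Suc n))"
proof (cases "x = a")
  case True
  show ?thesis
  proof (cases "y = a")
    case True2: True
    then show ?thesis using True unfolding Tset_def by auto
  next
    case False
    then show ?thesis using True unfolding Tset_def by (auto simp: Q_b)
  qed
next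
  case False
  show ?thesis
  proof (cases "x = Suc a")
    case True
    have q: "Q a 1 (x # y # w) = 1 + Q a 1 (y # w)" using True by (simp add: Q_b del: Q.simps)
    show ?thesis
    proof (cases "even n")
      case True2: True
      then have "Suc n div 2 = n div 2" by simp
      then show ?thesis using True True2 q unfolding Tset_def by auto
    next
      case False2: False
      have "\<not> (x # y # w \<in> Tset a (Suc (Suc n)))"
      proof
        assume h: "x # y # w \<in> Tset a (Suc (Suc n))"
        then have s: "set (y # w) \<subseteq> {a, Suc a}" "length w = n" unfolding Tset_def by auto
        have "Suc n div 2 \<le> Q a 1 (y # w)" using Q_lower[OF s(1)] s(2) by simp
        moreover have "Q a 1 (x # y # w) \<le> Suc (Suc n) div 2" using h unfolding Tset_def by auto
        ultimately show False using q False2 by presburger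
      qed
      then show ?thesis using False2 True False by auto
    qed
  next
    case False2: False
    then show ?thesis using False unfolding Tset_def by auto
  qed
qed

lemma T0: "Tset a 0 = {[]}" unfolding Tset_def by auto
lemma T1: "Tset a (Suc 0) = {[a]}" unfolding Tset_def by (auto simp: length_Suc_conv)

lemma T_rec: "Tset a (Suc (Suc n)) = (\<lambda>w. a # a # w) ` Tset a n \<union> (\<lambda>w. a # Suc a # w) ` Tset a n
   \<union> (if even n then Cons (Suc a) ` Tset a (Suc n) else {})"
proof
  show "Tset a (Suc (Suc n)) \<subseteq> (\<lambda>w. a # a # w) ` Tset a n \<union> (\<lambda>w. a # Suc a # w) ` Tset a n
   \<union> (if even n then Cons (Suc a) ` Tset a (Suc n) else {})"
  proof
    fix u assume u: "u \<in> Tset a (Suc (Suc n))"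
    then obtain x y w where xyw: "u = x # y # w" unfolding Tset_def by (cases u; cases "tl u") auto
    show "u \<in> (\<lambda>w. a # a # w) ` Tset a n \<union> (\<lambda>w. a # Suc a # w) ` Tset a n
      \<union> (if even n then Cons (Suc a) ` Tset a (Suc n) else {})"
      using u T_cons2[of x y w a n] unfolding xyw by auto
  qed
next
  show "(\<lambda>w. a # a # w) ` Tset a n \<union> (\<lambda>w. a # Suc a # w) ` Tset a n
   \<union> (if even n then Cons (Suc a) ` Tset a (Suc n) else {}) \<subseteq> Tset a (Suc (Suc n))"
  proof -
    have "Suc a # xa \<in> Tset a (Suc (Suc n))" if ev: "even n" and xa: "xa \<in> Tset a (Suc n)" for xa
    proof -
      obtain y w where "xa = y # w" using xa unfolding Tset_def by (cases xa) auto
      then show ?thesis using ev xa T_cons2 by auto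
    qed
    then show ?thesis using T_cons2 by auto
  qed
qed

lemma T_card_odd: "card (Tset a (2 * m + 1)) = 2 ^ m"
proof (induction m)
  case 0 then show ?case by (simp add: T1)
next
  case (Suc m)
  have e: "2 * Suc m + 1 = Suc (Suc (2 * m + 1))" by simp
  have "card (Tset a (2 * Suc m + 1)) = card (Tset a (2 * m + 1)) + card (Tset a (2 * m + 1))"
    unfolding e T_rec by (simp, rule card_union_images) (auto simp: Tset_finite inj_def)
  then show ?case using Suc by simp
qed

lemma T_card_even: "2 * card (Tset a (2 * m)) = (m + 2) * 2 ^ m"
proof (induction m)
  case 0 then show ?case by (simp add: T0)
next
  case (Suc m)
  have e: "2 * Suc m = Suc (Suc (2 * m))" by simp
  have d: "((\<lambda>w. a # a # w) ` Tset a (2*m) \<union> (\<lambda>w. a # Suc a # w) ` Tset a (2*m)) \<inter> Cons (Suc a) ` Tset a (Suc (2*m)) = {}"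
    by auto
  have c1: "card ((\<lambda>w. a # a # w) ` Tset a (2*m) \<union> (\<lambda>w. a # Suc a # w) ` Tset a (2*m)) = 2 * card (Tset a (2 * m))"
    by (subst card_union_images) (auto simp: Tset_finite inj_def)
  have c2: "card (Cons (Suc a) ` Tset a (Suc (2*m))) = 2 ^ m"
    using T_card_odd[of a m] by (simp add: card_image)
  have "card (Tset a (2 * Suc m)) = 2 * card (Tset a (2 * m)) + 2 ^ m"
    unfolding e T_rec using d c1 c2 by (simp add: card_Un_disjoint Tset_finite)
  then show ?case using Suc by (simp add: algebra_simps)
qed



definition Podd :: "nat \<Rightarrow> nat list \<Rightarrow> bool" where
  "Podd a u \<longleftrightarrow> set u \<subseteq> {a, Suc a} \<and> (\<forall>i<length u. even i \<longrightarrow> u ! i = a)"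

definition Ep :: "nat \<Rightarrow> nat list \<Rightarrow> bool" where
  "Ep a u \<longleftrightarrow> set u \<subseteq> {a, Suc a} \<and> (\<forall>i<length u. odd i \<longrightarrow> u ! i = a)"

lemma all_less_Suc2: "(\<forall>i<Suc (Suc n). P i) \<longleftrightarrow> P 0 \<and> P 1 \<and> (\<forall>i<n. P (Suc (Suc i)))"
proof
  assume "\<forall>i<Suc (Suc n). P i" then show "P 0 \<and> P 1 \<and> (\<forall>i<n. P (Suc (Suc i)))" by auto
next
  assume h: "P 0 \<and> P 1 \<and> (\<forall>i<n. P (Suc (Suc i)))"
  show "\<forall>i<Suc (Suc n). P i"
  proof (intro allI impI)
    fix i assume "i < Suc (Suc n)"
    then show "P i" using h by (cases i; cases "i - 1") auto
  qed
qed

lemma all_less_Suc1: "(\<forall>i<Suc n. P i) \<longleftrightarrow> P 0 \<and> (\<forall>i<n. P (Suc i))"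
  by (metis less_Suc_eq_0_disj Suc_less_eq zero_less_Suc)

lemma Podd_cons2: "Podd a (x # y # w) \<longleftrightarrow> x = a \<and> (y = a \<or> y = Suc a) \<and> Podd a w"
proof -
  have "(\<forall>i<length (x # y # w). even i \<longrightarrow> (x # y # w) ! i = a) \<longleftrightarrow> x = a \<and> (\<forall>i<length w. even i \<longrightarrow> w ! i = a)"
    by (simp only: length_Cons all_less_Suc2) simp
  then show ?thesis unfolding Podd_def by auto
qed

lemma Ep_cons2: "Ep a (x # y # w) \<longleftrightarrow> (x = a \<or> x = Suc a) \<and> y = a \<and> Ep a w"
proof -
  have "(\<forall>i<length (x # y # w). odd i \<longrightarrow> (x # y # w) ! i = a) \<longleftrightarrow> y = a \<and> (\<forall>i<length w. odd i \<longrightarrow> w ! i = a)"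
    by (simp only: length_Cons all_less_Suc2) simp
  then show ?thesis unfolding Ep_def by auto
qed

lemma Podd_Ep: "Podd a (y # w) \<longleftrightarrow> y = a \<and> Ep a w"
proof -
  have "(\<forall>i<length (y # w). even i \<longrightarrow> (y # w) ! i = a) \<longleftrightarrow> y = a \<and> (\<forall>i<length w. odd i \<longrightarrow> w ! i = a)"
    by (simp only: length_Cons all_less_Suc1) simp
  then show ?thesis unfolding Podd_def Ep_def by auto
qed

lemma T_odd: "u \<in> Tset a (2 * m + 1) \<longleftrightarrow> length u = 2 * m + 1 \<and> Podd a u"
proof (induction m arbitrary: u)
  case 0
  have t: "Tset a (2 * 0 + 1) = {[a]}" using T1 by simp
  show ?case unfolding t Podd_def by (auto simp: length_Suc_conv)
next
  case (Suc m)
  have e: "2 * Suc m + 1 = Suc (Suc (2 * m + 1))" by simp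
  show ?case
  proof (cases "length u = 2 * Suc m + 1")
    case True
    then obtain x y w where u: "u = x # y # w" by (cases u; cases "tl u") auto
    have "u \<in> Tset a (2 * Suc m + 1) \<longleftrightarrow> x = a \<and> (y = a \<or> y = Suc a) \<and> w \<in> Tset a (2 * m + 1)"
      unfolding e u T_cons2 by simp
    also have "\<dots> \<longleftrightarrow> length u = 2 * Suc m + 1 \<and> Podd a u"
      using Suc.IH[of w] True unfolding u Podd_cons2 by auto
    finally show ?thesis .
  next
    case False
    then show ?thesis unfolding Tset_def by auto
  qed
qed

lemma Ep_blocks: "Ep a w \<and> length w = 2 * m \<longleftrightarrow> (\<exists>bs. length bs = m \<and> set bs \<subseteq> {[a, a], [Suc a, a]} \<and> w = concat bs)"
proof (induction m arbitrary: w)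
  case 0 then show ?case unfolding Ep_def by auto
next
  case (Suc m)
  show ?case
  proof
    assume h: "Ep a w \<and> length w = 2 * Suc m"
    then obtain x y w' where w: "w = x # y # w'" by (cases w; cases "tl w") auto
    have "Ep a w' \<and> length w' = 2 * m" "x = a \<or> x = Suc a" "y = a" using h unfolding w Ep_cons2 by auto
    then obtain bs where bs: "length bs = m" "set bs \<subseteq> {[a, a], [Suc a, a]}" "w' = concat bs"
      using Suc.IH by blast
    show "\<exists>bs. length bs = Suc m \<and> set bs \<subseteq> {[a, a], [Suc a, a]} \<and> w = concat bs"
      using bs \<open>x = a \<or> x = Suc a\<close> \<open>y = a\<close> w by (intro exI[of _ "[x, y] # bs"]) auto
  next
    assume "\<exists>bs. length bs = Suc m \<and> set bs \<subseteq> {[a, a], [Suc a, a]} \<and> w = concat bs"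
    then obtain bs0 where bs0: "length bs0 = Suc m" "set bs0 \<subseteq> {[a, a], [Suc a, a]}" "w = concat bs0" by blast
    then obtain c bs where cb: "bs0 = c # bs" by (cases bs0) auto
    have bs: "length bs = m" "set (c # bs) \<subseteq> {[a, a], [Suc a, a]}" "w = concat (c # bs)"
      using bs0 unfolding cb by auto
    then have c: "c = [a, a] \<or> c = [Suc a, a]" by auto
    have ih: "Ep a (concat bs) \<and> length (concat bs) = 2 * m" using Suc.IH bs by auto
    show "Ep a w \<and> length w = 2 * Suc m"
    proof (cases "c = [a, a]")
      case True then show ?thesis using ih bs(3) by (simp add: Ep_cons2)
    next
      case False then have "c = [Suc a, a]" using c by blast
      then show ?thesis using ih bs(3) by (simp add: Ep_cons2)
    qed
  qed
qed



lemma Psi_sup: "odd n \<Longrightarrow> {u. length u = n \<and> Podd a u} \<subseteq> Psi n a (Suc a)"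
proof
  fix u assume on: "odd n" and "u \<in> {u. length u = n \<and> Podd a u}"
  then have lu: "length u = n" and su: "set u \<subseteq> {a, Suc a}" and ev: "\<And>i. i < n \<Longrightarrow> even i \<Longrightarrow> u ! i = a"
    unfolding Podd_def by auto
  have n0: "0 < n" using on by (cases n) auto
  have u0: "u ! 0 = a" using ev[of 0] n0 by simp
  have un: "u ! (n - 1) = a" using ev[of "n - 1"] n0 on by simp
  have nobb: "\<forall>i. Suc i < n \<longrightarrow> \<not> (u ! i = Suc a \<and> u ! Suc i = Suc a)"
  proof (intro allI impI)
    fix i assume i: "Suc i < n"
    show "\<not> (u ! i = Suc a \<and> u ! Suc i = Suc a)"
    proof (cases "even i")
      case True then show ?thesis using ev[of i] i by simp
    next
      case False then show ?thesis using ev[of "Suc i"] i by simp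
    qed
  qed
  have runs: "\<forall>i j. i \<le> j \<and> j < n \<and> (\<forall>l. i \<le> l \<and> l \<le> j \<longrightarrow> u ! l = a) \<and>
             (i = 0 \<or> u ! (i - 1) \<noteq> a) \<and> (j = n - 1 \<or> u ! (j + 1) \<noteq> a)
             \<longrightarrow> odd (j - i + 1)"
  proof (intro allI impI, elim conjE)
    fix i j assume ij: "i \<le> j" "j < n" and l: "i = 0 \<or> u ! (i - 1) \<noteq> a" and r: "j = n - 1 \<or> u ! (j + 1) \<noteq> a"
    have ei: "even i"
    proof (cases "i = 0")
      case False
      then have "u ! (i - 1) \<noteq> a" using l by simp
      moreover have "i - 1 < n" using ij by simp
      ultimately have "odd (i - 1)" using ev[of "i - 1"] by blast
      then show ?thesis using False by presburger
    qed simp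
    have ej: "even j"
    proof (cases "j = n - 1")
      case True then show ?thesis using on n0 by presburger
    next
      case False
      then have "u ! (j + 1) \<noteq> a" "j + 1 < n" using r ij by auto
      then have "odd (j + 1)" using ev[of "j + 1"] by auto
      then show ?thesis by presburger
    qed
    show "odd (j - i + 1)" using ei ej ij by presburger
  qed
  show "u \<in> Psi n a (Suc a)" unfolding Psi_def using lu su n0 u0 un nobb runs by blast
qed

lemma Psi_sub: "Psi n a (Suc a) \<subseteq> {u. length u = n \<and> Podd a u}"
proof
  fix u assume u: "u \<in> Psi n a (Suc a)"
  then have lu: "length u = n" and su: "set u \<subseteq> {a, Suc a}" and n0: "0 < n" and u0: "u ! 0 = a"
    and nobb: "\<And>i. Suc i < n \<Longrightarrow> \<not> (u ! i = Suc a \<and> u ! Suc i = Suc a)"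
    and runs: "\<And>i j. i \<le> j \<Longrightarrow> j < n \<Longrightarrow> (\<forall>l. i \<le> l \<and> l \<le> j \<longrightarrow> u ! l = a) \<Longrightarrow>
             (i = 0 \<or> u ! (i - 1) \<noteq> a) \<Longrightarrow> (j = n - 1 \<or> u ! (j + 1) \<noteq> a) \<Longrightarrow> odd (j - i + 1)"
    unfolding Psi_def by blast+
  have letter: "u ! i = a \<or> u ! i = Suc a" if "i < n" for i
  proof -
    have "u ! i \<in> set u" using that lu by simp
    then show ?thesis using su by blast
  qed
  have "\<forall>i<n. even i \<longrightarrow> u ! i = a"
  proof (rule ccontr)
    assume "\<not> (\<forall>i<n. even i \<longrightarrow> u ! i = a)"
    then have ex: "\<exists>p. p < n \<and> even p \<and> u ! p \<noteq> a" by blast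
    define p where "p = (LEAST p. p < n \<and> even p \<and> u ! p \<noteq> a)"
    have p: "p < n" "even p" "u ! p \<noteq> a" using LeastI_ex[OF ex] unfolding p_def by blast+
    have pmin: "\<And>q. q < p \<Longrightarrow> \<not> (q < n \<and> even q \<and> u ! q \<noteq> a)"
      unfolding p_def using not_less_Least by blast
    have p0: "p \<noteq> 0"
    proof
      assume "p = 0" then show False using p(3) u0 by simp
    qed
    have ub: "u ! p = Suc a" using letter[OF p(1)] p(3) by simp
    have up1: "u ! (p - 1) = a"
    proof -
      have "Suc (p - 1) < n" using p p0 by simp
      then have "\<not> (u ! (p - 1) = Suc a \<and> u ! Suc (p - 1) = Suc a)" by (rule nobb)
      moreover have "Suc (p - 1) = p" using p0 by simp
      ultimately have "u ! (p - 1) \<noteq> Suc a" using ub by simp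
      moreover have "p - 1 < n" using p by simp
      ultimately show ?thesis using letter[of "p - 1"] by blast
    qed
    define S where "S = {i. \<forall>l. i \<le> l \<and> l \<le> p - 1 \<longrightarrow> u ! l = a}"
    have pS: "p - 1 \<in> S" unfolding S_def mem_Collect_eq
    proof (intro allI impI)
      fix l assume "p - 1 \<le> l \<and> l \<le> p - 1"
      then have "l = p - 1" by simp
      then show "u ! l = a" using up1 by simp
    qed
    define i0 where "i0 = (LEAST i. i \<in> S)"
    have i0S: "i0 \<in> S" unfolding i0_def by (rule LeastI[of "\<lambda>i. i \<in> S", OF pS])
    have i0le: "i0 \<le> p - 1" unfolding i0_def by (rule Least_le[of "\<lambda>i. i \<in> S", OF pS])
    have i0min: "\<And>j. j < i0 \<Longrightarrow> j \<notin> S" unfolding i0_def using not_less_Least by blast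
    have left: "i0 = 0 \<or> u ! (i0 - 1) \<noteq> a"
    proof (rule ccontr)
      assume "\<not> (i0 = 0 \<or> u ! (i0 - 1) \<noteq> a)"
      then have h: "i0 \<noteq> 0" "u ! (i0 - 1) = a" by auto
      have "i0 - 1 \<in> S" unfolding S_def mem_Collect_eq
      proof (intro allI impI)
        fix l assume "i0 - 1 \<le> l \<and> l \<le> p - 1"
        then show "u ! l = a"
        proof (cases "l = i0 - 1")
          case True then show ?thesis using h by simp
        next
          case False then have "i0 \<le> l" using \<open>i0 - 1 \<le> l \<and> l \<le> p - 1\<close> by auto
          moreover have "l \<le> p - 1" using \<open>i0 - 1 \<le> l \<and> l \<le> p - 1\<close> by simp
          moreover have "\<forall>l. i0 \<le> l \<and> l \<le> p - 1 \<longrightarrow> u ! l = a" using i0S unfolding S_def by simp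
          ultimately show ?thesis by blast
        qed
      qed
      moreover have "i0 - 1 < i0" using h by simp
      ultimately show False using i0min by blast
    qed
    have ei0: "even i0"
    proof (cases "i0 = 0")
      case False
      then have "u ! (i0 - 1) \<noteq> a" using left by simp
      moreover have "i0 - 1 < p" using i0le p0 by simp
      ultimately have "\<not> (i0 - 1 < n \<and> even (i0 - 1))" using pmin[of "i0 - 1"] by blast
      moreover have "i0 - 1 < n" using \<open>i0 - 1 < p\<close> p by simp
      ultimately have "odd (i0 - 1)" by blast
      then show ?thesis using False by presburger
    qed simp
    have "odd ((p - 1) - i0 + 1)"
    proof (rule runs)
      show "i0 \<le> p - 1" by (rule i0le)
      show "p - 1 < n" using p by simp
      show "\<forall>l. i0 \<le> l \<and> l \<le> p - 1 \<longrightarrow> u ! l = a" using i0S unfolding S_def by blast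
      show "i0 = 0 \<or> u ! (i0 - 1) \<noteq> a" by (rule left)
      show "p - 1 = n - 1 \<or> u ! (p - 1 + 1) \<noteq> a" using p p0 by simp
    qed
    moreover have "i0 < p" using p0 i0le by simp
    ultimately show False using ei0 p(2) by presburger
  qed
  then show "u \<in> {u. length u = n \<and> Podd a u}" unfolding Podd_def using lu su by auto
qed

lemma Psi_eq: "odd n \<Longrightarrow> Psi n a (Suc a) = {u. length u = n \<and> Podd a u}"
  using Psi_sub Psi_sup by blast



definition ORD :: "nat \<Rightarrow> nat list list \<Rightarrow> bool" where
  "ORD a bs \<longleftrightarrow> (\<forall>i j. i < j \<and> j < length bs \<longrightarrow> \<not> (bs ! i = [Suc a, a] \<and> bs ! j = [a, Suc a]))"

lemma ORD_cons: "ORD a (c # bs) \<longleftrightarrow> ORD a bs \<and> (c = [Suc a, a] \<longrightarrow> [a, Suc a] \<notin> set bs)"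
proof
  assume h: "ORD a (c # bs)"
  have "ORD a bs" unfolding ORD_def
  proof (intro allI impI)
    fix i j assume "i < j \<and> j < length bs"
    then have "Suc i < Suc j \<and> Suc j < length (c # bs)" by simp
    then have "\<not> ((c # bs) ! Suc i = [Suc a, a] \<and> (c # bs) ! Suc j = [a, Suc a])"
      using h unfolding ORD_def by blast
    then show "\<not> (bs ! i = [Suc a, a] \<and> bs ! j = [a, Suc a])" by simp
  qed
  moreover have "c = [Suc a, a] \<longrightarrow> [a, Suc a] \<notin> set bs"
  proof
    assume c: "c = [Suc a, a]"
    show "[a, Suc a] \<notin> set bs"
    proof
      assume "[a, Suc a] \<in> set bs"
      then obtain j where j: "j < length bs" "bs ! j = [a, Suc a]" by (auto simp: in_set_conv_nth)
      then have "0 < Suc j \<and> Suc j < length (c # bs)" by simp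
      then have "\<not> ((c # bs) ! 0 = [Suc a, a] \<and> (c # bs) ! Suc j = [a, Suc a])" using h unfolding ORD_def by blast
      then show False using c j by simp
    qed
  qed
  ultimately show "ORD a bs \<and> (c = [Suc a, a] \<longrightarrow> [a, Suc a] \<notin> set bs)" by blast
next
  assume h: "ORD a bs \<and> (c = [Suc a, a] \<longrightarrow> [a, Suc a] \<notin> set bs)"
  show "ORD a (c # bs)" unfolding ORD_def
  proof (intro allI impI)
    fix i j assume ij: "i < j \<and> j < length (c # bs)"
    then obtain j' where j': "j = Suc j'" by (cases j) auto
    show "\<not> ((c # bs) ! i = [Suc a, a] \<and> (c # bs) ! j = [a, Suc a])"
    proof (cases i)
      case 0
      have "bs ! j' \<in> set bs" using ij j' by simp
      then show ?thesis using h 0 j' by auto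
    next
      case (Suc i')
      then have "i' < j' \<and> j' < length bs" using ij j' by simp
      then have "\<not> (bs ! i' = [Suc a, a] \<and> bs ! j' = [a, Suc a])" using h unfolding ORD_def by blast
      then show ?thesis using Suc j' by simp
    qed
  qed
qed

definition Blk :: "nat \<Rightarrow> nat list set" where "Blk a = {[a, a], [a, Suc a], [Suc a, a]}"

lemma PhiB_cons2:
  "(\<exists>bs. length bs = Suc m \<and> set bs \<subseteq> Blk a \<and> x # y # w = concat bs \<and> ORD a bs) \<longleftrightarrow>
   [x, y] \<in> Blk a \<and> (\<exists>bs'. length bs' = m \<and> set bs' \<subseteq> Blk a \<and> w = concat bs' \<and> ORD a bs' \<and>
      ([x, y] = [Suc a, a] \<longrightarrow> [a, Suc a] \<notin> set bs'))"
proof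
  assume "\<exists>bs. length bs = Suc m \<and> set bs \<subseteq> Blk a \<and> x # y # w = concat bs \<and> ORD a bs"
  then obtain bs where bs: "length bs = Suc m" "set bs \<subseteq> Blk a" "x # y # w = concat bs" "ORD a bs" by blast
  then obtain c bs' where cb: "bs = c # bs'" by (cases bs) auto
  have cB: "c \<in> Blk a" using bs cb by auto
  then obtain p q where pq: "c = [p, q]" unfolding Blk_def by auto
  have e: "x = p" "y = q" "w = concat bs'" using bs(3) cb pq by auto
  show "[x, y] \<in> Blk a \<and> (\<exists>bs'. length bs' = m \<and> set bs' \<subseteq> Blk a \<and> w = concat bs' \<and> ORD a bs' \<and>
      ([x, y] = [Suc a, a] \<longrightarrow> [a, Suc a] \<notin> set bs'))"
    using cB pq e bs cb ORD_cons[of a c bs'] by auto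
next
  assume "[x, y] \<in> Blk a \<and> (\<exists>bs'. length bs' = m \<and> set bs' \<subseteq> Blk a \<and> w = concat bs' \<and> ORD a bs' \<and>
      ([x, y] = [Suc a, a] \<longrightarrow> [a, Suc a] \<notin> set bs'))"
  then obtain bs' where h: "[x, y] \<in> Blk a" "length bs' = m" "set bs' \<subseteq> Blk a" "w = concat bs'" "ORD a bs'"
    "[x, y] = [Suc a, a] \<longrightarrow> [a, Suc a] \<notin> set bs'" by blast
  show "\<exists>bs. length bs = Suc m \<and> set bs \<subseteq> Blk a \<and> x # y # w = concat bs \<and> ORD a bs"
    using h ORD_cons[of a "[x, y]" bs'] by (intro exI[of _ "[x, y] # bs'"]) auto
qed

lemma ORD_noab: "[a, Suc a] \<notin> set bs \<Longrightarrow> ORD a bs"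
  unfolding ORD_def
proof (intro allI impI)
  fix i j assume h: "[a, Suc a] \<notin> set bs" and ij: "i < j \<and> j < length bs"
  then have "bs ! j \<in> set bs" by simp
  then have "bs ! j \<noteq> [a, Suc a]" using h by metis
  then show "\<not> (bs ! i = [Suc a, a] \<and> bs ! j = [a, Suc a])" by simp
qed

lemma Phi_T: "length w = 2 * m \<Longrightarrow> (w \<in> Tset a (2 * m) \<longleftrightarrow>
    (\<exists>bs. length bs = m \<and> set bs \<subseteq> Blk a \<and> w = concat bs \<and> ORD a bs))"
proof (induction m arbitrary: w)
  case 0
  have t: "Tset a (2 * 0) = {[]}" using T0 by simp
  show ?case unfolding t using 0 by (auto simp: ORD_def)
next
  case (Suc m)
  then obtain x y w' where w: "w = x # y # w'" by (cases w; cases "tl w") auto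
  have lw: "length w' = 2 * m" using Suc.prems w by simp
  have e: "2 * Suc m = Suc (Suc (2 * m))" by simp
  have L: "w \<in> Tset a (2 * Suc m) \<longleftrightarrow> (x = a \<and> (y = a \<or> y = Suc a) \<and> w' \<in> Tset a (2 * m)) \<or>
      (x = Suc a \<and> y # w' \<in> Tset a (Suc (2 * m)))"
    unfolding e w T_cons2 by simp
  have R: "(\<exists>bs. length bs = Suc m \<and> set bs \<subseteq> Blk a \<and> w = concat bs \<and> ORD a bs) \<longleftrightarrow>
   [x, y] \<in> Blk a \<and> (\<exists>bs'. length bs' = m \<and> set bs' \<subseteq> Blk a \<and> w' = concat bs' \<and> ORD a bs' \<and>
      ([x, y] = [Suc a, a] \<longrightarrow> [a, Suc a] \<notin> set bs'))"
    unfolding w by (rule PhiB_cons2)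
  show ?case
  proof (cases "x = a")
    case True
    have "[x, y] \<noteq> [Suc a, a]" using True by simp
    then have "w \<in> Tset a (2 * Suc m) \<longleftrightarrow> (y = a \<or> y = Suc a) \<and> (\<exists>bs. length bs = m \<and> set bs \<subseteq> Blk a \<and> w' = concat bs \<and> ORD a bs)"
      using L Suc.IH[OF lw] True by simp
    moreover have "[x, y] \<in> Blk a \<longleftrightarrow> y = a \<or> y = Suc a" using True unfolding Blk_def by auto
    ultimately show ?thesis using R \<open>[x, y] \<noteq> [Suc a, a]\<close> True by simp
  next
    case False
    show ?thesis
    proof (cases "x = Suc a")
      case True
      have t: "y # w' \<in> Tset a (2 * m + 1) \<longleftrightarrow> y = a \<and> Ep a w'"
        using T_odd[of "y # w'" a m] lw Podd_Ep by simp
      have "w \<in> Tset a (2 * Suc m) \<longleftrightarrow> y = a \<and> Ep a w'" using L True False t by simp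
      also have "\<dots> \<longleftrightarrow> y = a \<and> (\<exists>bs. length bs = m \<and> set bs \<subseteq> {[a, a], [Suc a, a]} \<and> w' = concat bs)"
        using Ep_blocks[of a w' m] lw by simp
      also have "\<dots> \<longleftrightarrow> (\<exists>bs. length bs = Suc m \<and> set bs \<subseteq> Blk a \<and> w = concat bs \<and> ORD a bs)"
      proof -
        have B: "[x, y] \<in> Blk a \<longleftrightarrow> y = a" using True unfolding Blk_def by auto
        have S: "(set bs' \<subseteq> Blk a \<and> ORD a bs' \<and> [a, Suc a] \<notin> set bs') \<longleftrightarrow> set bs' \<subseteq> {[a, a], [Suc a, a]}" for bs'
        proof
          assume "set bs' \<subseteq> Blk a \<and> ORD a bs' \<and> [a, Suc a] \<notin> set bs'"
          then show "set bs' \<subseteq> {[a, a], [Suc a, a]}" unfolding Blk_def by auto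
        next
          assume h: "set bs' \<subseteq> {[a, a], [Suc a, a]}"
          then have "[a, Suc a] \<notin> set bs'" by auto
          then show "set bs' \<subseteq> Blk a \<and> ORD a bs' \<and> [a, Suc a] \<notin> set bs'"
            using ORD_noab[of a bs'] h unfolding Blk_def by auto
        qed
        show ?thesis unfolding R B using True S by auto
      qed
      finally show ?thesis .
    next
      case False2: False
      have "[x, y] \<notin> Blk a" using False False2 unfolding Blk_def by auto
      then show ?thesis using L R False False2 by simp
    qed
  qed
qed

lemma Phi_eq: "even n \<Longrightarrow> Phi n a (Suc a) = Tset a n"
proof -
  assume ev: "even n"
  then obtain m where n: "n = 2 * m" by blast
  have "Phi n a (Suc a) = {w. length w = n \<and> (\<exists>bs. length bs = m \<and> set bs \<subseteq> Blk a \<and> w = concat bs \<and> ORD a bs)}"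
    unfolding Phi_def Blk_def ORD_def using n by simp
  also have "\<dots> = Tset a n" using Phi_T[of _ m a] n unfolding Tset_def by auto
  finally show ?thesis .
qed



lemma odd_ab: "odd k \<Longrightarrow> k \<ge> 2 \<Longrightarrow> (k - 1) div 2 = AA k \<and> (k + 1) div 2 = Suc (AA k) \<and> bt k = 1"
  unfolding AA_def bt_def by presburger

lemma Cset_odd: "odd k \<Longrightarrow> k \<ge> 2 \<Longrightarrow> Cset k n = Tset (AA k) n"
  unfolding Cset_def Tset_def using odd_ab[of k] by auto

lemma real_card_even:
  assumes "2 * c = (m + 2) * 2 ^ m" "m \<ge> 1"
  shows "real c = real (2 * m + 4) * (2::real) powi (int m - 2)"
proof -
  have p: "(2::real) powi (int m - 2) = 2 ^ m / 4"
    by (subst power_int_diff) (auto simp: power_int_of_nat)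
  have "real (2 * c) = real ((m + 2) * 2 ^ m)" using assms(1) by simp
  then have "2 * real c = (real m + 2) * 2 ^ m" by (simp add: algebra_simps)
  moreover have "\<And>X c' m'::real. 2 * c' = (m' + 2) * X \<Longrightarrow> c' = (2 * m' + 4) * (X / 4)"
    by (simp add: field_simps)
  ultimately show ?thesis unfolding p by simp
qed

theorem theorem4p2:
  fixes n k :: nat
  assumes "k \<ge> 2" and "n \<ge> 2"
  shows "(even k \<longrightarrow> pell_center n k = Theta n k) \<and>
         (odd k \<and> even n \<longrightarrow> pell_center n k = Phi n ((k - 1) div 2) ((k + 1) div 2)) \<and>
         (odd k \<and> odd n \<longrightarrow> pell_center n k = Psi n ((k - 1) div 2) ((k + 1) div 2)) \<and>
         (even k \<longrightarrow> card (pell_center n k) = fib (n + 2)) \<and>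
         (odd k \<and> even n \<longrightarrow>
            real (card (pell_center n k)) = real (n + 4) * (2::real) powi (int (n div 2) - 2)) \<and>
         (odd k \<and> odd n \<longrightarrow> card (pell_center n k) = 2 ^ ((n - 1) div 2)) \<and>
         (even k \<longrightarrow> graph_iso (pell_center n k) (pell_adj k) (fib_cube_vertices n) fib_cube_adj)"
proof -
  have k: "k \<ge> 2" by (rule assms(1))
  have C: "pell_center n k = Cset k n" by (rule center_eq[OF k])
  have ev1: "even k \<longrightarrow> pell_center n k = Theta n k"
    using C Cset_even[of k n] Theta_eq[of k n] k by simp
  have ev2: "even k \<longrightarrow> card (pell_center n k) = fib (n + 2)"
    using C Cset_even[of k n] Nset_card[of "AA k" n] k by simp
  have ev3: "even k \<longrightarrow> graph_iso (pell_center n k) (pell_adj k) (fib_cube_vertices n) fib_cube_adj"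
    using ev1 iso_even[of k n] k by simp
  have od1: "odd k \<and> even n \<longrightarrow> pell_center n k = Phi n ((k - 1) div 2) ((k + 1) div 2)"
    using C Cset_odd[of k n] odd_ab[of k] Phi_eq[of n "AA k"] k by simp
  have od2: "odd k \<and> odd n \<longrightarrow> pell_center n k = Psi n ((k - 1) div 2) ((k + 1) div 2)"
  proof
    assume h: "odd k \<and> odd n"
    then obtain m where m: "n = 2 * m + 1" using oddE by blast
    have "Psi n ((k - 1) div 2) ((k + 1) div 2) = {u. length u = n \<and> Podd (AA k) u}"
      using odd_ab[of k] h k Psi_eq[of n "AA k"] by simp
    also have "\<dots> = Tset (AA k) n" using T_odd[of _ "AA k" m] m by auto
    finally show "pell_center n k = Psi n ((k - 1) div 2) ((k + 1) div 2)"
      using C Cset_odd[of k n] h k by simp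
  qed
  have od3: "odd k \<and> even n \<longrightarrow>
            real (card (pell_center n k)) = real (n + 4) * (2::real) powi (int (n div 2) - 2)"
  proof
    assume h: "odd k \<and> even n"
    then obtain m where m: "n = 2 * m" by blast
    have m1: "m \<ge> 1" using assms(2) m by simp
    have "2 * card (pell_center n k) = (m + 2) * 2 ^ m"
      using C Cset_odd[of k n] h k T_card_even[of "AA k" m] m by simp
    then have "real (card (pell_center n k)) = real (2 * m + 4) * (2::real) powi (int m - 2)"
      using real_card_even m1 by blast
    then show "real (card (pell_center n k)) = real (n + 4) * (2::real) powi (int (n div 2) - 2)"
      using m by simp
  qed
  have od4: "odd k \<and> odd n \<longrightarrow> card (pell_center n k) = 2 ^ ((n - 1) div 2)"
  proof
    assume h: "odd k \<and> odd n"
    then obtain m where m: "n = 2 * m + 1" using oddE by blast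
    show "card (pell_center n k) = 2 ^ ((n - 1) div 2)"
      using C Cset_odd[of k n] h k T_card_odd[of "AA k" m] m by simp
  qed
  show ?thesis using ev1 ev2 ev3 od1 od2 od3 od4 by blast
qed


end
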